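(* There exists a binary sequence $S$ such that $R_{\mathrm{PPM}^*}(S)=0$ but for every $k\in\mathbb{N}$, $\rho_{\mathrm{PPM}_k}(S)\ge \tfrac12$. Here $R_T(S)=\limsup_{m\to\infty}|T(S\upharpoonright m)|/m$ and $\rho_T(S)=\liminf_{m\to\infty}|T(S\upharpoonright m)|/m$.
   Context: $S\upharpoonright m$ is the length-$m$ prefix of $S$; $\log$ is base $2$. Common model mechanics (without exclusion, escape Method C) on binary input: after reading a prefix $x$, each stored context $c$ has, for each bit $b$, a frequency count equal to the number of occurrences of $cb$ as a substring of $x$, and an escape count equal to the number of distinct bits that have followed $c$ in $x$; a context is deterministic if its escape count is $1$. Relevant contexts are the stored contexts that are suffixes of $x$. To encode the next bit $b$ starting from a chosen current context: if $b$ has count $f>0$ there, it is encoded with probability $f/(T+e)$ ($T$ the total bit count, $e$ the escape count); otherwise an escape is encoded with probability $e/(T+e)$ and the next shorter relevant context becomes current; if $b$ is unseen even in the empty context, after the escape $b$ is encoded with probability $1/2$. The model is then updated. The output is an arithmetic code of length $\lceil -\log P\rceil+O(1)$, $P$ the product of all probabilities used. $\mathrm{PPM}^*$: the stored contexts are the empty context and, whenever a string $w$ occurs at least twice in $x$, the contexts $wb$ for each bit $b$ such that $wb$ occurs in $x$ followed by a further bit; the initial current context is the shortest deterministic relevant context, or the longest relevant context if none is deterministic. $\mathrm{PPM}_k$ (bounded PPM with maximal context length $k$): the stored contexts are all strings of length at most $k$ that have occurred in $x$ followed by a bit (plus the empty context); the initial current context is the longest relevant context. *)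

theory Defs
  imports Complex_Main "HOL-Library.Extended_Real" "HOL-Library.Liminf_Limsup"
begin

definition prefix_of :: "(nat \<Rightarrow> bool) \<Rightarrow> nat \<Rightarrow> bool list" where
  "prefix_of S m = map S [0..<m]"

definition occ :: "bool list \<Rightarrow> bool list \<Rightarrow> nat" where
  "occ w x = card {i. i + length w \<le> length x \<and> take (length w) (drop i x) = w}"

definition cnt :: "bool list \<Rightarrow> bool list \<Rightarrow> bool \<Rightarrow> nat" where
  "cnt x c b = occ (c @ [b]) x"

definition tot :: "bool list \<Rightarrow> bool list \<Rightarrow> nat" where
  "tot x c = cnt x c False + cnt x c True"

definition esc :: "bool list \<Rightarrow> bool list \<Rightarrow> nat" where
  "esc x c = card {b. cnt x c b > 0}"

definition sfx :: "bool list \<Rightarrow> nat \<Rightarrow> bool list" where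
  "sfx x l = drop (length x - l) x"

text \<open>Probability of encoding bit b after x, walking the given chain of contexts
  (from the current context down to the empty context), PPM escape method C,
  without exclusion.  Convention: an escape from a context with T + e = 0
  (only the empty context before any input) has probability 1.\<close>
fun enc :: "bool list \<Rightarrow> bool \<Rightarrow> bool list list \<Rightarrow> real" where
  "enc x b [] = 1 / 2"
| "enc x b (c # cs) =
     (if cnt x c b > 0 then real (cnt x c b) / real (tot x c + esc x c)
      else (if tot x c + esc x c = 0 then 1 else real (esc x c) / real (tot x c + esc x c))
           * enc x b cs)"

definition chain :: "(bool list \<Rightarrow> bool list \<Rightarrow> bool) \<Rightarrow> bool list \<Rightarrow> nat \<Rightarrow> bool list list" where
  "chain stored x l = filter (stored x) (map (sfx x) (rev [0..<Suc l]))"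

definition prob_model :: "(bool list \<Rightarrow> bool list \<Rightarrow> bool) \<Rightarrow> (bool list \<Rightarrow> nat) \<Rightarrow> bool list \<Rightarrow> real" where
  "prob_model stored init y =
     (\<Prod>i<length y. enc (take i y) (y ! i) (chain stored (take i y) (init (take i y))))"

text \<open>Output length of the arithmetic coder (the additive O(1) term is irrelevant
  for the asymptotic ratios and is taken to be 0).\<close>
definition code_len :: "(bool list \<Rightarrow> bool list \<Rightarrow> bool) \<Rightarrow> (bool list \<Rightarrow> nat) \<Rightarrow> bool list \<Rightarrow> real" where
  "code_len stored init y = real_of_int \<lceil>- log 2 (prob_model stored init y)\<rceil>"

definition stored_star :: "bool list \<Rightarrow> bool list \<Rightarrow> bool" where
  "stored_star x c \<longleftrightarrow> c = [] \<or>
     (\<exists>w b. c = w @ [b] \<and> occ w x \<ge> 2 \<and> tot x c > 0)"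

definition init_star :: "bool list \<Rightarrow> nat" where
  "init_star x =
     (if \<exists>l \<le> length x. stored_star x (sfx x l) \<and> esc x (sfx x l) = 1
      then (LEAST l. l \<le> length x \<and> stored_star x (sfx x l) \<and> esc x (sfx x l) = 1)
      else (GREATEST l. l \<le> length x \<and> stored_star x (sfx x l)))"

definition ppm_star_len :: "bool list \<Rightarrow> real" where
  "ppm_star_len y = code_len stored_star init_star y"

definition stored_k :: "nat \<Rightarrow> bool list \<Rightarrow> bool list \<Rightarrow> bool" where
  "stored_k k x c \<longleftrightarrow> c = [] \<or> (length c \<le> k \<and> tot x c > 0)"

definition init_k :: "nat \<Rightarrow> bool list \<Rightarrow> nat" where
  "init_k k x = (GREATEST l. l \<le> length x \<and> stored_k k x (sfx x l))"

definition ppm_k_len :: "nat \<Rightarrow> bool list \<Rightarrow> real" where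
  "ppm_k_len k y = code_len (stored_k k) (init_k k) y"

definition upper_ratio :: "(bool list \<Rightarrow> real) \<Rightarrow> (nat \<Rightarrow> bool) \<Rightarrow> ereal" where
  "upper_ratio T S = limsup (\<lambda>m. ereal (T (prefix_of S m) / real m))"

definition lower_ratio :: "(bool list \<Rightarrow> real) \<Rightarrow> (nat \<Rightarrow> bool) \<Rightarrow> ereal" where
  "lower_ratio T S = liminf (\<lambda>m. ereal (T (prefix_of S m) / real m))"

end

theory Submission
  imports Defs
begin


definition occset :: "bool list \<Rightarrow> bool list \<Rightarrow> nat set" where
  "occset w x = {i. i + length w \<le> length x \<and> take (length w) (drop i x) = w}"

lemma occ_occset: "occ w x = card (occset w x)"
  by (simp add: occ_def occset_def)

lemma occset_sub: "occset w x \<subseteq> {..length x}"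
  by (auto simp: occset_def)

lemma finite_occset[simp]: "finite (occset w x)"
  using occset_sub finite_subset by blast

lemma occset_nth: "i \<in> occset w x \<longleftrightarrow> i + length w \<le> length x \<and> (\<forall>l<length w. x ! (i + l) = w ! l)"
proof -
  have "i + length w \<le> length x \<Longrightarrow> take (length w) (drop i x) = w \<longleftrightarrow> (\<forall>l<length w. x ! (i + l) = w ! l)"
    by (auto simp: list_eq_iff_nth_eq)
  then show ?thesis by (auto simp: occset_def)
qed

lemma occset_append1: "i \<in> occset w x \<Longrightarrow> i \<in> occset w (x @ y)"
  by (auto simp: occset_nth nth_append)

lemma occset_append2: "i \<in> occset w y \<Longrightarrow> i + length x \<in> occset w (x @ y)"
  by (auto simp: occset_nth nth_append add.commute add.left_commute)

lemma occ_append: assumes "w \<noteq> []" shows "occ w x + occ w y \<le> occ w (x @ y)"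
proof -
  let ?A = "occset w x" and ?B = "(\<lambda>i. i + length x) ` occset w y"
  have d: "?A \<inter> ?B = {}" using assms by (auto simp: occset_def)
  have s: "?A \<union> ?B \<subseteq> occset w (x @ y)" using occset_append1 occset_append2 by blast
  have "card ?B = occ w y" by (simp add: occ_occset card_image inj_on_def)
  then have "occ w x + occ w y = card (?A \<union> ?B)"
    by (simp add: occ_occset card_Un_disjoint d)
  also have "\<dots> \<le> occ w (x @ y)" unfolding occ_occset by (rule card_mono) (simp, use s in blast)
  finally show ?thesis .
qed

lemma occ_mono_append: "occ w x \<le> occ w (x @ y)"
  unfolding occ_occset by (rule card_mono) (auto intro: occset_append1)

lemma occ_concat: assumes "w \<noteq> []" shows "sum_list (map (occ w) xs) \<le> occ w (concat xs)"
proof (induction xs)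
  case (Cons a xs) then show ?case using occ_append[OF assms, of a "concat xs"] by simp
qed simp

lemma occ_replicate: assumes "w \<noteq> []" shows "a * occ w xs \<le> occ w (concat (replicate a xs))"
  using occ_concat[OF assms, of "replicate a xs"] by (simp add: sum_list_replicate)

lemma occ_drop_pat: assumes "d \<le> length w" shows "occ w x \<le> occ (drop d w) x"
proof -
  have "(\<lambda>i. i + d) ` occset w x \<subseteq> occset (drop d w) x"
    using assms by (auto simp: occset_nth add.assoc)
  then have "card ((\<lambda>i. i + d) ` occset w x) \<le> occ (drop d w) x"
    unfolding occ_occset by (rule card_mono[rotated]) simp
  then show ?thesis by (simp add: occ_occset card_image inj_on_def)
qed

lemma occ_take_pat: assumes "l \<le> length w" shows "occ w x \<le> occ (take l w) x"
proof -
  have "occset w x \<subseteq> occset (take l w) x"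
    using assms by (auto simp: occset_nth min_def)
  then show ?thesis unfolding occ_occset by (rule card_mono[rotated]) simp
qed

lemma occ_sum_le:
  assumes "finite W" "\<And>w. w \<in> W \<Longrightarrow> length w = l" "l \<ge> 1"
  shows "(\<Sum>w\<in>W. occ w x) \<le> length x"
proof -
  have "(\<Sum>w\<in>W. occ w x) = card (\<Union>w\<in>W. occset w x)"
    unfolding occ_occset
    apply (rule card_UN_disjoint[symmetric])
    using assms apply simp
     apply simp
    using assms unfolding occset_def by fastforce
  also have "\<dots> \<le> card {..<length x}"
    by (rule card_mono) (use assms in \<open>auto simp: occset_def\<close>)
  finally show ?thesis by simp
qed

lemma occ_le_len: assumes "w \<noteq> []" shows "occ w x \<le> length x"
  using occ_sum_le[of "{w}" "length w" x] assms by (simp add: Suc_le_eq)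



fun words :: "nat \<Rightarrow> bool list list" where
  "words 0 = [[]]"
| "words (Suc n) = map (Cons False) (words n) @ map (Cons True) (words n)"

lemma words_len: "u \<in> set (words n) \<longleftrightarrow> length u = n"
proof (induction n arbitrary: u)
  case 0 then show ?case by auto
next
  case (Suc n)
  show ?case
  proof (cases u)
    case Nil then show ?thesis by auto
  next
    case (Cons a l) then show ?thesis using Suc.IH[of l] by (cases a) auto
  qed
qed

lemma words_distinct: "distinct (words n)"
  by (induction n) (auto simp: distinct_map)

lemma words_length: "length (words n) = 2 ^ n"
  by (induction n) auto

lemma words_set: "set (words n) = {u. length u = n}"
  using words_len by auto

definition body :: "nat \<Rightarrow> bool list" where
  "body n = concat (map (\<lambda>u. u @ [True]) (words n))"

lemma body_length: "length (body n) = (n + 1) * 2 ^ n"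
proof -
  have "length (body n) = sum_list (map (\<lambda>u. length u + 1) (words n))"
    by (simp add: body_def length_concat comp_def)
  also have "\<dots> = sum_list (map (\<lambda>u. n + 1) (words n))"
    by (rule arg_cong[where f=sum_list], rule map_cong) (auto simp: words_len)
  also have "\<dots> = (n + 1) * 2 ^ n" by (simp add: map_replicate_const sum_list_replicate words_length)
  finally show ?thesis .
qed

lemma words_ne: "words n \<noteq> []"
  using words_length[of n] by auto

lemma body_ne: "body n \<noteq> []"
  using body_length[of n] by auto

lemma last_concat_True:
  assumes "xss \<noteq> []" "\<And>u. u \<in> set xss \<Longrightarrow> u \<noteq> [] \<and> last u = True"
  shows "last (concat xss) = True"
  using assms
proof (induction xss)
  case (Cons a xss)
  then show ?case by (cases "xss = []") (auto simp: last_append)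
qed simp

lemma body_last: "last (body n) = True"
  unfolding body_def
proof (rule last_concat_True)
  show "map (\<lambda>u. u @ [True]) (words n) \<noteq> []" using words_ne by simp
next
  fix u assume "u \<in> set (map (\<lambda>u. u @ [True]) (words n))"
  then obtain v where "u = v @ [True]" by auto
  then show "u \<noteq> [] \<and> last u = True" by simp
qed

lemma card_words_fix:
  assumes "q + length w \<le> n"
  shows "card {u :: bool list. length u = n \<and> take (length w) (drop q u) = w} = 2 ^ (n - length w)"
proof -
  let ?l = "length w"
  let ?A = "{a :: bool list. length a = q}" and ?C = "{c :: bool list. length c = n - q - ?l}"
  have cardL: "card {a :: bool list. length a = m} = 2 ^ m" for m
    using card_lists_length_eq[of "UNIV :: bool set" m] by simp
  have fin: "finite {a :: bool list. length a = m}" for m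
    using finite_lists_length_eq[of "UNIV :: bool set" m] by simp
  have eq: "{u :: bool list. length u = n \<and> take ?l (drop q u) = w} = (\<lambda>(a, c). a @ w @ c) ` (?A \<times> ?C)"
  proof (rule set_eqI, rule iffI)
    fix u assume u: "u \<in> {u :: bool list. length u = n \<and> take ?l (drop q u) = w}"
    have "u = take q u @ w @ drop (q + ?l) u"
    proof -
      have "u = take q u @ drop q u" by simp
      also have "drop q u = take ?l (drop q u) @ drop ?l (drop q u)" by (rule append_take_drop_id[symmetric])
      finally show ?thesis using u by (simp add: add.commute)
    qed
    moreover have "(take q u, drop (q + ?l) u) \<in> ?A \<times> ?C" using u assms by auto
    ultimately show "u \<in> (\<lambda>(a, c). a @ w @ c) ` (?A \<times> ?C)" by (metis (no_types, lifting) case_prod_conv image_eqI)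
  next
    fix u assume "u \<in> (\<lambda>(a, c). a @ w @ c) ` (?A \<times> ?C)"
    then show "u \<in> {u :: bool list. length u = n \<and> take ?l (drop q u) = w}" using assms by auto
  qed
  have inj: "inj_on (\<lambda>(a, c). a @ w @ c) (?A \<times> ?C)"
    by (auto simp: inj_on_def)
  have "card {u :: bool list. length u = n \<and> take ?l (drop q u) = w} = card (?A \<times> ?C)"
    unfolding eq by (rule card_image[OF inj])
  also have "\<dots> = 2 ^ q * 2 ^ (n - q - ?l)" by (simp add: card_cartesian_product cardL)
  also have "\<dots> = 2 ^ (n - ?l)" using assms by (simp add: power_add[symmetric])
  finally show ?thesis .
qed

lemma sum_occ_words:
  assumes "length w \<le> n"
  shows "(\<Sum>u\<in>{u :: bool list. length u = n}. occ w u) = (n + 1 - length w) * 2 ^ (n - length w)"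
proof -
  let ?l = "length w" and ?U = "{u :: bool list. length u = n}"
  have finU: "finite ?U" using finite_lists_length_eq[of "UNIV :: bool set" n] by simp
  have "(\<Sum>u\<in>?U. occ w u) = (\<Sum>u\<in>?U. \<Sum>q\<in>{..n - ?l}. (if take ?l (drop q u) = w then 1 else 0 :: nat))"
  proof (rule sum.cong[OF refl])
    fix u assume "u \<in> ?U"
    then have "occ w u = card {q \<in> {..n - ?l}. take ?l (drop q u) = w}"
      unfolding occ_def using assms by (intro arg_cong[where f=card]) auto
    then show "occ w u = (\<Sum>q\<in>{..n - ?l}. (if take ?l (drop q u) = w then 1 else 0 :: nat))"
      by (simp add: sum.If_cases, intro arg_cong[where f=card], auto)
  qed
  also have "\<dots> = (\<Sum>q\<in>{..n - ?l}. \<Sum>u\<in>?U. (if take ?l (drop q u) = w then 1 else 0 :: nat))"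
    by (rule sum.swap)
  also have "\<dots> = (\<Sum>q\<in>{..n - ?l}. 2 ^ (n - ?l))"
  proof (rule sum.cong[OF refl])
    fix q assume "q \<in> {..n - ?l}"
    then have q: "q + ?l \<le> n" using assms by auto
    have "(\<Sum>u\<in>?U. (if take ?l (drop q u) = w then 1 else 0 :: nat)) = card {u \<in> ?U. take ?l (drop q u) = w}"
      using finU by (simp add: sum.If_cases Collect_conj_eq)
    also have "\<dots> = 2 ^ (n - ?l)" using card_words_fix[OF q] by simp
    finally show "(\<Sum>u\<in>?U. (if take ?l (drop q u) = w then 1 else 0 :: nat)) = 2 ^ (n - ?l)" .
  qed
  also have "\<dots> = (n + 1 - ?l) * 2 ^ (n - ?l)" using assms by (simp add: Suc_diff_le)
  finally show ?thesis .
qed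

lemma occ_append2: assumes "w \<noteq> []" shows "occ w y \<le> occ w (x @ y)"
  using occ_append[OF assms, of x y] by simp

lemma occ_body:
  assumes "w \<noteq> []" "length w \<le> n"
  shows "(n + 1 - length w) * 2 ^ (n - length w) \<le> occ w (body n)"
proof -
  have "(n + 1 - length w) * 2 ^ (n - length w) = sum_list (map (occ w) (words n))"
    using sum_occ_words[OF assms(2)] by (simp add: sum_list_distinct_conv_sum_set words_distinct words_set)
  also have "\<dots> \<le> sum_list (map (occ w) (map (\<lambda>u. u @ [True]) (words n)))"
    unfolding map_map comp_def by (rule sum_list_mono) (rule occ_mono_append)
  also have "\<dots> \<le> occ w (body n)" unfolding body_def by (rule occ_concat[OF assms(1)])
  finally show ?thesis .
qed



definition xb :: "nat \<Rightarrow> bool list" where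
  "xb n = replicate (n + 1) False @ True # body n"

definition XX :: "nat \<Rightarrow> nat" where "XX n = length (xb n)"

definition rr :: "nat \<Rightarrow> nat" where "rr n = 64 ^ (n + 1)"

definition blk :: "nat \<Rightarrow> bool list" where
  "blk n = concat (replicate (rr n) (xb n))"

fun pre :: "nat \<Rightarrow> bool list" where
  "pre 0 = []"
| "pre (Suc n) = pre n @ blk n"

definition NN :: "nat \<Rightarrow> nat" where "NN n = length (pre n)"

definition SS :: "nat \<Rightarrow> bool" where "SS i = pre (Suc i) ! i"

lemma XX_eq: "XX n = n + 2 + (n + 1) * 2 ^ n"
  by (simp add: XX_def xb_def body_length)

lemma XX_pos: "XX n > 0" by (simp add: XX_eq)

lemma XX_ge: "2 ^ n \<le> XX n" by (simp add: XX_eq)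

lemma XX_le: "XX n \<le> 4 ^ (n + 1)"
proof -
  have a: "n + 1 \<le> 2 ^ n" by (induction n) auto
  have b: "(n + 1) * 2 ^ n \<le> 4 ^ n"
  proof -
    have "(n + 1) * 2 ^ n \<le> 2 ^ n * 2 ^ n" using a by (rule mult_le_mono1)
    also have "\<dots> = 4 ^ n" by (simp add: power_mult_distrib[symmetric])
    finally show ?thesis .
  qed
  have c: "n + 2 \<le> 2 * 4 ^ n"
  proof -
    have "(2::nat) ^ n \<le> 4 ^ n" by (simp add: power_mono)
    then show ?thesis using a by simp
  qed
  show ?thesis using b c by (simp add: XX_eq)
qed

lemma rr_pos: "rr n > 0" by (simp add: rr_def)

lemma blk_length: "length (blk n) = rr n * XX n"
  by (simp add: blk_def length_concat XX_def sum_list_replicate)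

lemma NN_0[simp]: "NN 0 = 0" by (simp add: NN_def)

lemma NN_Suc: "NN (Suc n) = NN n + rr n * XX n"
  by (simp add: NN_def blk_length)

lemma NN_less: "NN n < NN (Suc n)"
  using rr_pos[of n] XX_pos[of n] by (simp add: NN_Suc)

lemma NN_strict: "strict_mono NN"
  unfolding strict_mono_Suc_iff using NN_less by blast

lemma NN_ge: "n \<le> NN n"
  by (induction n) (auto simp: Suc_le_eq intro: le_less_trans[OF _ NN_less])

lemma NN_mono: "m \<le> n \<Longrightarrow> NN m \<le> NN n"
  using NN_strict strict_mono_leD by blast

lemma pre_prefix: "m \<le> n \<Longrightarrow> \<exists>z. pre n = pre m @ z"
proof (induction n)
  case 0 then show ?case by simp
next
  case (Suc n)
  show ?case
  proof (cases "m = Suc n")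
    case True then show ?thesis by simp
  next
    case False
    then have "m \<le> n" using Suc by simp
    then obtain z where "pre n = pre m @ z" using Suc by blast
    then show ?thesis by simp
  qed
qed

lemma pre_nth: assumes "i < NN m" "i < NN n" shows "pre m ! i = pre n ! i"
proof (cases "m \<le> n")
  case True
  then obtain z where "pre n = pre m @ z" using pre_prefix by blast
  then show ?thesis using assms by (simp add: nth_append NN_def)
next
  case False
  then obtain z where "pre m = pre n @ z" using pre_prefix[of n m] by auto
  then show ?thesis using assms by (simp add: nth_append NN_def)
qed

lemma SS_pre: "i < NN n \<Longrightarrow> SS i = pre n ! i"
  unfolding SS_def
  by (rule pre_nth) (use NN_ge[of "Suc i"] in auto)

lemma prefix_SS: "m \<le> NN n \<Longrightarrow> prefix_of SS m = take m (pre n)"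
  by (auto simp: prefix_of_def list_eq_iff_nth_eq SS_pre NN_def)

lemma prefix_of_nth: "i < m \<Longrightarrow> prefix_of S m ! i = S i"
  by (simp add: prefix_of_def)

lemma prefix_of_take: "i \<le> m \<Longrightarrow> take i (prefix_of S m) = prefix_of S i"
  by (simp add: prefix_of_def take_map)

lemma prefix_of_length[simp]: "length (prefix_of S m) = m"
  by (simp add: prefix_of_def)

lemma exists_block: "\<exists>n. NN n \<le> i \<and> i < NN (Suc n)"
proof -
  have ex: "\<exists>n. i < NN n" using NN_ge[of "Suc i"] by (intro exI[of _ "Suc i"]) simp
  define n0 where "n0 = (LEAST n. i < NN n)"
  have n0: "i < NN n0" unfolding n0_def using ex by (rule LeastI_ex)
  have "n0 \<noteq> 0"
  proof
    assume "n0 = 0" then show False using n0 by simp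
  qed
  then obtain n where n: "n0 = Suc n" by (cases n0) auto
  have "n < n0" using n by simp
  then have "\<not> i < NN n" unfolding n0_def by (rule not_less_Least)
  then show ?thesis using n0 n by (intro exI[of _ n]) simp
qed

lemma exists_block_ge: "NN n0 \<le> i \<Longrightarrow> \<exists>n\<ge>n0. NN n \<le> i \<and> i < NN (Suc n)"
proof -
  assume h: "NN n0 \<le> i"
  obtain n where n: "NN n \<le> i" "i < NN (Suc n)" using exists_block by blast
  have "n0 \<le> n"
  proof (rule ccontr)
    assume "\<not> n0 \<le> n"
    then have "Suc n \<le> n0" by simp
    then have "NN (Suc n) \<le> NN n0" by (rule NN_mono)
    then show False using n h by simp
  qed
  then show ?thesis using n by blast
qed

lemma decomp: "\<exists>n a p. i = NN n + a * XX n + p \<and> a < rr n \<and> p < XX n"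
proof -
  obtain n where n: "NN n \<le> i" "i < NN (Suc n)" using exists_block by blast
  define y where "y = i - NN n"
  have y: "y < rr n * XX n" using n by (simp add: y_def NN_Suc)
  have "y = (y div XX n) * XX n + y mod XX n" by simp
  moreover have "y div XX n < rr n" using y XX_pos[of n] by (simp add: div_less_iff_less_mult)
  moreover have "y mod XX n < XX n" using XX_pos[of n] by simp
  ultimately show ?thesis using n unfolding y_def
    by (metis add.assoc le_add_diff_inverse)
qed

lemma take_concat_rep:
  "a < r \<Longrightarrow> p \<le> length xs \<Longrightarrow>
   take (a * length xs + p) (concat (replicate r xs)) = concat (replicate a xs) @ take p xs"
proof (induction a arbitrary: r)
  case 0
  then obtain r' where "r = Suc r'" by (cases r) auto
  then show ?case using 0 by simp
next
  case (Suc a)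
  then obtain r' where r: "r = Suc r'" by (cases r) auto
  have "take (Suc a * length xs + p) (concat (replicate r xs))
      = xs @ take (a * length xs + p) (concat (replicate r' xs))"
    by (simp add: r add.assoc)
  then show ?case using Suc r by simp
qed

lemma nth_concat_rep:
  "m < a \<Longrightarrow> p < length xs \<Longrightarrow> (concat (replicate a xs) @ ys) ! (m * length xs + p) = xs ! p"
proof (induction m arbitrary: a)
  case 0
  then obtain a' where "a = Suc a'" by (cases a) auto
  then show ?case using 0 by (simp add: nth_append)
next
  case (Suc m)
  then obtain a' where a: "a = Suc a'" by (cases a) auto
  have "(concat (replicate a xs) @ ys) ! (Suc m * length xs + p)
     = (concat (replicate a' xs) @ ys) ! (m * length xs + p)"
    by (simp add: a nth_append add.assoc)
  then show ?case using Suc a by simp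
qed

lemma drop_concat_rep:
  "j \<le> a \<Longrightarrow> drop (j * length xs) (concat (replicate a xs) @ ys) = concat (replicate (a - j) xs) @ ys"
proof (induction j arbitrary: a)
  case (Suc j)
  then obtain a' where a: "a = Suc a'" by (cases a) auto
  have "drop (Suc j * length xs) (concat (replicate a xs) @ ys) = drop (j * length xs) (concat (replicate a' xs) @ ys)"
    by (simp add: a)
  then show ?case using Suc a by simp
qed simp

lemma block_prefix:
  assumes "a < rr n" "p < XX n"
  shows "prefix_of SS (NN n + a * XX n + p) = pre n @ concat (replicate a (xb n)) @ take p (xb n)"
proof -
  have le: "NN n + a * XX n + p \<le> NN (Suc n)"
  proof -
    have "a * XX n + p < (a + 1) * XX n" using assms by simp
    also have "\<dots> \<le> rr n * XX n" using assms by (intro mult_le_mono1) simp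
    finally show ?thesis by (simp add: NN_Suc)
  qed
  have "prefix_of SS (NN n + a * XX n + p) = take (NN n + a * XX n + p) (pre n @ blk n)"
    using prefix_SS[OF le] by simp
  also have "\<dots> = pre n @ take (a * XX n + p) (blk n)" by (simp add: NN_def add.assoc)
  also have "take (a * XX n + p) (blk n) = concat (replicate a (xb n)) @ take p (xb n)"
    unfolding blk_def XX_def using assms by (intro take_concat_rep) (auto simp: XX_def)
  finally show ?thesis by simp
qed

lemma block_bit:
  assumes "a < rr n" "p < XX n"
  shows "SS (NN n + a * XX n + p) = xb n ! p"
proof -
  have lt: "NN n + a * XX n + p < NN (Suc n)"
  proof -
    have "a * XX n + p < (a + 1) * XX n" using assms by simp
    also have "\<dots> \<le> rr n * XX n" using assms by (intro mult_le_mono1) simp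
    finally show ?thesis by (simp add: NN_Suc)
  qed
  have "SS (NN n + a * XX n + p) = pre (Suc n) ! (NN n + a * XX n + p)"
    by (rule SS_pre[OF lt])
  also have "\<dots> = blk n ! (a * XX n + p)" by (simp add: nth_append NN_def add.assoc)
  also have "\<dots> = (concat (replicate (rr n) (xb n)) @ []) ! (a * length (xb n) + p)"
    by (simp add: blk_def XX_def)
  also have "\<dots> = xb n ! p" using assms by (intro nth_concat_rep) (auto simp: XX_def)
  finally show ?thesis .
qed



lemma esc_le2: "esc x c \<le> 2"
proof -
  have "card {b. cnt x c b > 0} \<le> card (UNIV :: bool set)" by (rule card_mono) auto
  then show ?thesis by (simp add: esc_def)
qed

lemma esc_0: "esc x c = 0 \<Longrightarrow> tot x c = 0"
proof -
  assume "esc x c = 0"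
  then have "{b. cnt x c b > 0} = {}" by (simp add: esc_def)
  then show ?thesis by (auto simp: tot_def)
qed

lemma esc_2: "esc x c = 2 \<Longrightarrow> cnt x c b > 0"
proof -
  assume h: "esc x c = 2"
  have "{b. cnt x c b > 0} = UNIV"
  proof (rule ccontr)
    assume "{b. cnt x c b > 0} \<noteq> UNIV"
    then have "{b. cnt x c b > 0} \<subset> (UNIV :: bool set)" by auto
    then have "card {b. cnt x c b > 0} < card (UNIV :: bool set)"
      using psubset_card_mono[of "UNIV :: bool set"] by simp
    then show False using h by (simp add: esc_def)
  qed
  then show ?thesis by auto
qed

lemma esc_1: "esc x c = 1 \<Longrightarrow> cnt x c b > 0 \<Longrightarrow> cnt x c (\<not> b) = 0"
proof -
  assume h: "esc x c = 1" "cnt x c b > 0"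
  show ?thesis
  proof (rule ccontr)
    assume "cnt x c (\<not> b) \<noteq> 0"
    then have "cnt x c b' > 0" for b' using h(2) by (cases b'; cases b) auto
    then have "{b. cnt x c b > 0} = UNIV" by auto
    then show False using h(1) by (simp add: esc_def)
  qed
qed

lemma esc_1_I: "cnt x c b > 0 \<Longrightarrow> cnt x c (\<not> b) = 0 \<Longrightarrow> esc x c = 1"
proof -
  assume h: "cnt x c b > 0" "cnt x c (\<not> b) = 0"
  have "cnt x c b' > 0 \<longleftrightarrow> b' = b" for b' using h by (cases b'; cases b) auto
  then have "{b. cnt x c b > 0} = {b}" by auto
  then show ?thesis by (simp add: esc_def)
qed

lemma tot_le: "tot x c \<le> length x"
proof (cases "c @ [False] = c @ [True]")
  case True then show ?thesis by simp
next
  case False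
  have "(\<Sum>w\<in>{c @ [False], c @ [True]}. occ w x) \<le> length x"
    by (rule occ_sum_le[of _ "length c + 1"]) auto
  then show ?thesis using False by (simp add: tot_def cnt_def)
qed

lemma cnt_le_tot: "cnt x c b \<le> tot x c"
  by (cases b) (auto simp: tot_def)

lemma enc_pos: "enc x b cs > 0"
proof (induction cs)
  case Nil then show ?case by simp
next
  case (Cons c cs)
  show ?case
  proof (cases "cnt x c b > 0")
    case True
    have "real (tot x c) + real (esc x c) > 0" using cnt_le_tot[of x c b] True by linarith
    then show ?thesis using True by simp
  next
    case False
    have "esc x c > 0 \<or> tot x c + esc x c = 0" using esc_0[of x c] by auto
    then show ?thesis using False Cons by auto
  qed
qed

lemma enc_le1: "enc x b cs \<le> 1"
proof (induction cs)
  case Nil then show ?case by simp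
next
  case (Cons c cs)
  have p: "enc x b cs > 0" by (rule enc_pos)
  show ?case
  proof (cases "cnt x c b > 0")
    case True
    have "real (cnt x c b) \<le> real (tot x c + esc x c)" using cnt_le_tot[of x c b] by simp
    then show ?thesis using True by (simp add: divide_le_eq_1)
  next
    case False
    have f: "(if tot x c + esc x c = 0 then 1 else real (esc x c) / real (tot x c + esc x c)) \<le> 1"
      by (auto simp: divide_le_eq_1)
    have f0: "0 \<le> (if tot x c + esc x c = 0 then 1 else real (esc x c) / real (tot x c + esc x c))"
      by auto
    have "(if tot x c + esc x c = 0 then 1 else real (esc x c) / real (tot x c + esc x c)) * enc x b cs \<le> 1 * 1"
      by (rule mult_mono[OF f Cons]) (use f0 less_imp_le[OF p] in auto)
    then show ?thesis using False by simp
  qed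
qed

definition ee :: "(bool list \<Rightarrow> bool list \<Rightarrow> bool) \<Rightarrow> (bool list \<Rightarrow> nat) \<Rightarrow> (nat \<Rightarrow> bool) \<Rightarrow> nat \<Rightarrow> real" where
  "ee st ini S i = enc (prefix_of S i) (S i) (chain st (prefix_of S i) (ini (prefix_of S i)))"

lemma prob_prefix: "prob_model st ini (prefix_of S m) = (\<Prod>i<m. ee st ini S i)"
  unfolding prob_model_def ee_def
  by (rule prod.cong) (simp_all add: prefix_of_take prefix_of_nth)

lemma ee_pos: "ee st ini S i > 0" by (simp add: ee_def enc_pos)
lemma ee_le1: "ee st ini S i \<le> 1" by (simp add: ee_def enc_le1)

lemma prob_pos: "prob_model st ini (prefix_of S m) > 0"
  unfolding prob_prefix by (rule prod_pos) (simp add: ee_pos)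

lemma code_len_ge: "code_len st ini y \<ge> - log 2 (prob_model st ini y)"
  unfolding code_len_def by linarith

lemma code_len_le: "code_len st ini y \<le> - log 2 (prob_model st ini y) + 1"
  unfolding code_len_def by linarith

lemma log_prob_prefix:
  "- log 2 (prob_model st ini (prefix_of S m)) = (\<Sum>i<m. - log 2 (ee st ini S i))"
proof -
  have "ln (\<Prod>i<m. ee st ini S i) = (\<Sum>i<m. ln (ee st ini S i))"
    by (rule ln_prod) (use ee_pos in \<open>auto simp: less_le\<close>)
  then show ?thesis
    unfolding prob_prefix log_def by (simp add: sum_divide_distrib[symmetric] sum_negf)
qed

lemma prob_upper:
  assumes "\<And>i. i0 \<le> i \<Longrightarrow> i < m \<Longrightarrow> ee st ini S i \<le> 2 / 3"
  shows "prob_model st ini (prefix_of S m) \<le> (2 / 3) ^ (m - i0)"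
proof -
  have "(\<Prod>i<m. ee st ini S i) \<le> (\<Prod>i<m. (if i0 \<le> i then 2 / 3 else 1 :: real))"
    by (rule prod_mono) (use assms ee_pos ee_le1 in \<open>auto simp: less_imp_le\<close>)
  also have "\<dots> = (2 / 3) ^ card ({..<m} \<inter> Collect ((\<le>) i0))"
    by (simp add: prod.If_cases)
  also have "card ({..<m} \<inter> Collect ((\<le>) i0)) = m - i0"
  proof -
    have "{..<m} \<inter> Collect ((\<le>) i0) = {i0..<m}" by auto
    then show ?thesis by simp
  qed
  finally show ?thesis by (simp add: prob_prefix)
qed

lemma log_32: "4 / 7 \<le> log 2 (3 / 2 :: real)"
proof -
  have "(2 powr (4 / 7 :: real)) ^ 7 = 2 powr (4 :: real)"
    by (simp add: powr_realpow[symmetric] powr_powr)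
  also have "\<dots> = 16" by simp
  also have "\<dots> \<le> (3 / 2) ^ 7" by (simp add: power_divide)
  finally have "(2 powr (4 / 7 :: real)) ^ 7 \<le> (3 / 2) ^ 7" .
  then have "2 powr (4 / 7 :: real) \<le> 3 / 2"
    using power_mono_iff[of "2 powr (4 / 7 :: real)" "3 / 2" 7] by simp
  then show ?thesis using le_log_iff[of 2 "3/2" "4/7"] by linarith
qed



lemma arith_j1:
  fixes l K j :: nat
  assumes K: "K = 2 ^ l" and j: "(l + 2) * (K + 1) \<le> j"
  shows "(j + 1) * 2 ^ j + j + 2 + 2 ^ j \<le> (K + 1) * ((j + 1 - l) * 2 ^ (j - l))"
proof -
  define d where "d = j - l"
  define D where "D = (2::nat) ^ d"
  have "l \<le> (l + 2) * (K + 1)" by (simp add: algebra_simps)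
  then have lj: "l \<le> j" using j by linarith
  have jd: "j = l + d" using lj unfolding d_def by simp
  have pj: "(2::nat) ^ j = K * D" unfolding K D_def jd by (simp add: power_add)
  have d1: "(l + 1) * K + K + 3 \<le> d + 1"
  proof -
    have "(l + 2) * (K + 1) = l * K + 2 * K + l + 2" by (simp add: algebra_simps)
    then show ?thesis using j jd by (simp add: algebra_simps)
  qed
  have Kl: "l + 1 \<le> K" unfolding K by (induction l) auto
  have Dd: "d + 1 \<le> D" unfolding D_def by (induction d) auto
  have D1: "1 \<le> D" unfolding D_def by simp
  have e1: "((l + 1) * K + K + 3) * D \<le> (d + 1) * D" using d1 by (rule mult_le_mono1)
  have e2: "l + d + 2 \<le> (K + 3) * D"
  proof -
    have "l + d + 2 \<le> K + D" using Kl Dd by simp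
    also have "K + D \<le> K * D + D" using D1 by simp
    also have "\<dots> \<le> (K + 3) * D" by (simp add: algebra_simps)
    finally show ?thesis .
  qed
  have "(j + 1) * 2 ^ j + j + 2 + 2 ^ j = (l + d + 1) * (K * D) + (l + d + 2) + K * D"
    unfolding pj by (simp add: jd algebra_simps)
  also have "\<dots> \<le> (l + d + 1) * (K * D) + (K + 3) * D + K * D" using e2 by simp
  also have "\<dots> = (d + 1) * (K * D) + (((l + 1) * K + K + 3) * D)" by (simp add: algebra_simps)
  also have "\<dots> \<le> (d + 1) * (K * D) + (d + 1) * D" using e1 by simp
  also have "\<dots> = (K + 1) * ((j + 1 - l) * 2 ^ (j - l))" unfolding D_def d_def[symmetric] jd
    by (simp add: algebra_simps)
  finally show ?thesis .
qed

lemma occ_xb_ge: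
  assumes "w \<noteq> []" "length w \<le> n"
  shows "(n + 1 - length w) * 2 ^ (n - length w) \<le> occ w (xb n)"
proof -
  have "occ w (body n) \<le> occ w ((replicate (n + 1) False @ [True]) @ body n)" by (rule occ_append2[OF assms(1)])
  then show ?thesis using occ_body[OF assms] by (simp add: xb_def)
qed

lemma occ_xb_big:
  fixes w :: "bool list"
  assumes "length w = Suc k" "(Suc k + 2) * (2 ^ Suc k + 1) \<le> j"
  shows "XX j + 2 ^ j \<le> (2 ^ Suc k + 1) * occ w (xb j)"
proof -
  have "Suc k \<le> (Suc k + 2) * (2 ^ Suc k + 1)" by (simp add: algebra_simps)
  then have lj: "length w \<le> j" using assms by linarith
  have "XX j + 2 ^ j = (j + 1) * 2 ^ j + j + 2 + 2 ^ j" by (simp add: XX_eq)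
  also have "\<dots> \<le> (2 ^ Suc k + 1) * ((j + 1 - Suc k) * 2 ^ (j - Suc k))"
    by (rule arith_j1) (use assms in auto)
  also have "\<dots> \<le> (2 ^ Suc k + 1) * occ w (xb j)"
  proof (rule mult_le_mono2)
    have wne: "w \<noteq> []" using assms(1) by auto
    show "(j + 1 - Suc k) * 2 ^ (j - Suc k) \<le> occ w (xb j)"
      using occ_xb_ge[OF wne lj] assms(1) by simp
  qed
  finally show ?thesis .
qed

lemma NN_le: "NN n \<le> 2 * 256 ^ n"
proof (induction n)
  case 0 then show ?case by simp
next
  case (Suc n)
  have "rr n * XX n \<le> 64 ^ (n + 1) * 4 ^ (n + 1)" unfolding rr_def by (rule mult_le_mono2) (rule XX_le)
  also have "\<dots> = 256 ^ (n + 1)" by (simp add: power_mult_distrib[symmetric])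
  finally have "rr n * XX n \<le> 256 ^ (n + 1)" .
  then show ?case using Suc by (simp add: NN_Suc)
qed

lemma occ_pre_sum:
  fixes w :: "bool list"
  assumes "length w = Suc k"
  defines "K \<equiv> 2 ^ Suc k + 1" and "j1 \<equiv> (Suc k + 2) * (2 ^ Suc k + 1)"
  shows "NN n + (\<Sum>j\<in>{j1..<n}. rr j * 2 ^ j) \<le> K * occ w (pre n) + NN j1"
proof (induction n)
  case 0 then show ?case by simp
next
  case (Suc n)
  show ?case
  proof (cases "j1 \<le> n")
    case False
    then have "{j1..<Suc n} = {}" by auto
    moreover have "NN (Suc n) \<le> NN j1" using False by (intro NN_mono) simp
    ultimately show ?thesis by simp
  next
    case True
    have wne: "w \<noteq> []" using assms(1) by auto
    have big: "XX n + 2 ^ n \<le> K * occ w (xb n)" unfolding K_def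
      by (rule occ_xb_big[OF assms(1)]) (use True in \<open>simp add: j1_def\<close>)
    have "occ w (pre n) + occ w (blk n) \<le> occ w (pre (Suc n))" using occ_append[OF wne] by simp
    moreover have "rr n * occ w (xb n) \<le> occ w (blk n)" unfolding blk_def by (rule occ_replicate[OF wne])
    ultimately have o: "occ w (pre n) + rr n * occ w (xb n) \<le> occ w (pre (Suc n))" by simp
    have "NN (Suc n) + (\<Sum>j\<in>{j1..<Suc n}. rr j * 2 ^ j)
        = (NN n + (\<Sum>j\<in>{j1..<n}. rr j * 2 ^ j)) + rr n * (XX n + 2 ^ n)"
      using True by (simp add: NN_Suc algebra_simps)
    also have "\<dots> \<le> (K * occ w (pre n) + NN j1) + rr n * (K * occ w (xb n))"
      using Suc.IH mult_le_mono2[OF big, of "rr n"] by (rule add_mono)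
    also have "\<dots> = K * (occ w (pre n) + rr n * occ w (xb n)) + NN j1" by (simp add: algebra_simps)
    also have "\<dots> \<le> K * occ w (pre (Suc n)) + NN j1" using o by simp
    finally show ?thesis .
  qed
qed



definition j1k :: "nat \<Rightarrow> nat" where "j1k k = (Suc k + 2) * (2 ^ Suc k + 1)"
definition n0k :: "nat \<Rightarrow> nat" where "n0k k = 2 * j1k k + 2"

lemma big_rr:
  assumes "n0k k \<le> n"
  shows "NN (j1k k) + XX n \<le> rr (n - 1) * 2 ^ (n - 1)"
proof -
  let ?j = "j1k k"
  have n2: "2 \<le> n" using assms by (simp add: n0k_def)
  have rr: "rr (n - 1) = 64 ^ n" using n2 by (simp add: rr_def)
  have a: "NN ?j \<le> 64 ^ n"
  proof -
    have "NN ?j \<le> 2 * 256 ^ ?j" by (rule NN_le)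
    also have "\<dots> \<le> 4096 * 4096 ^ ?j" by (intro mult_le_mono) (simp_all add: power_mono)
    also have "\<dots> = 64 ^ (2 * ?j + 2)" by (simp add: power_mult power_add)
    also have "\<dots> \<le> 64 ^ n" using assms by (intro power_increasing) (simp_all add: n0k_def)
    finally show ?thesis .
  qed
  have b: "XX n \<le> 64 ^ n"
  proof -
    have "XX n \<le> 4 ^ (n + 1)" by (rule XX_le)
    also have "\<dots> = 4 * 4 ^ n" by simp
    also have "\<dots> \<le> 16 ^ n * 4 ^ n"
    proof (rule mult_le_mono1)
      have "(16::nat) ^ 1 \<le> 16 ^ n" using n2 by (intro power_increasing) simp_all
      then show "(4::nat) \<le> 16 ^ n" by simp
    qed
    also have "\<dots> = 64 ^ n" by (simp add: power_mult_distrib[symmetric])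
    finally show ?thesis .
  qed
  have c: "(2::nat) \<le> 2 ^ (n - 1)"
  proof -
    have "(2::nat) ^ 1 \<le> 2 ^ (n - 1)" using n2 by (intro power_increasing) simp_all
    then show ?thesis by simp
  qed
  have "NN ?j + XX n \<le> 64 ^ n * 2" using a b by simp
  also have "\<dots> \<le> 64 ^ n * 2 ^ (n - 1)" using c by (intro mult_le_mono2)
  finally show ?thesis using rr by simp
qed

lemma nat_dist3: "(K::nat) * (A + a * B) = K * A + a * (K * B)"
  by (simp add: algebra_simps)

lemma occ_prefix_big:
  fixes w :: "bool list"
  assumes w: "length w = Suc k" and n: "n0k k \<le> n" and a: "a < rr n" and p: "p < XX n"
  shows "NN n + a * XX n + p \<le> (2 ^ Suc k + 1) * occ w (prefix_of SS (NN n + a * XX n + p))"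
proof -
  let ?K = "2 ^ Suc k + 1 :: nat" and ?j = "j1k k"
  have wne: "w \<noteq> []" using w by auto
  have jn: "?j \<le> n" using n by (simp add: n0k_def)
  have jn1: "n - 1 \<in> {?j..<n}" using n by (simp add: n0k_def)
  have o1: "occ w (pre n) + a * occ w (xb n) \<le> occ w (prefix_of SS (NN n + a * XX n + p))"
  proof -
    have "occ w (pre n) + occ w (concat (replicate a (xb n)) @ take p (xb n))
        \<le> occ w (pre n @ concat (replicate a (xb n)) @ take p (xb n))" by (rule occ_append[OF wne])
    moreover have "a * occ w (xb n) \<le> occ w (concat (replicate a (xb n)) @ take p (xb n))"
      using occ_replicate[OF wne, of a "xb n"] occ_mono_append[of w "concat (replicate a (xb n))" "take p (xb n)"]
      by linarith
    ultimately show ?thesis using block_prefix[OF a p] by simp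
  qed
  have s: "NN n + (\<Sum>j\<in>{?j..<n}. rr j * 2 ^ j) \<le> ?K * occ w (pre n) + NN ?j"
    using occ_pre_sum[OF w, of n] by (simp add: j1k_def)
  have t: "rr (n - 1) * 2 ^ (n - 1) \<le> (\<Sum>j\<in>{?j..<n}. rr j * 2 ^ j)"
    using member_le_sum[OF jn1, of "\<lambda>j. rr j * 2 ^ j"] by simp
  have u: "XX n \<le> ?K * occ w (xb n)"
    using occ_xb_big[OF w, of n] jn by (simp add: j1k_def)
  have v: "NN ?j + XX n \<le> rr (n - 1) * 2 ^ (n - 1)" by (rule big_rr[OF n])
  have "NN n + a * XX n + p < NN n + XX n + a * XX n" using p by simp
  also have "\<dots> \<le> ?K * occ w (pre n) + a * XX n" using s t v by linarith
  also have "\<dots> \<le> ?K * occ w (pre n) + a * (?K * occ w (xb n))" using u by simp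
  also have "\<dots> = ?K * (occ w (pre n) + a * occ w (xb n))" by (rule nat_dist3[symmetric])
  also have "\<dots> \<le> ?K * occ w (prefix_of SS (NN n + a * XX n + p))" using o1 by (rule mult_le_mono2)
  finally show ?thesis by simp
qed

lemma ratio_bound:
  fixes W :: "bool list set" and x :: "bool list" and K :: nat
  assumes fin: "finite W" and u: "u \<in> W" and v: "v \<in> W" and len: "\<And>w. w \<in> W \<Longrightarrow> length w = l"
    and l: "l \<ge> 1" and big: "\<And>w. w \<in> W \<Longrightarrow> real (length x) \<le> real K * real (occ w x)"
    and card: "card W + 1 = K"
  shows "real (occ u x) \<le> 2 * real (occ v x)"
proof -
  let ?i = "real (length x)"
  have K0: "real K > 0" using card by simp
  have sum: "(\<Sum>w\<in>W. real (occ w x)) \<le> ?i"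
    using occ_sum_le[OF fin len l, of x] by (simp only: of_nat_sum[symmetric] of_nat_le_iff)
  have "(\<Sum>w\<in>W. real (occ w x)) = real (occ u x) + (\<Sum>w\<in>W - {u}. real (occ w x))"
    using fin u by (simp add: sum.remove)
  moreover have "(\<Sum>w\<in>W - {u}. ?i / real K) \<le> (\<Sum>w\<in>W - {u}. real (occ w x))"
  proof (rule sum_mono)
    fix w assume "w \<in> W - {u}"
    then have "?i \<le> real K * real (occ w x)" using big by auto
    then show "?i / real K \<le> real (occ w x)" using K0 by (simp add: divide_le_eq mult.commute)
  qed
  moreover have "(\<Sum>w\<in>W - {u}. ?i / real K) = (real K - 2) * (?i / real K)"
  proof -
    have "card (W - {u}) = card W - 1" using fin u by simp
    moreover have "card W \<ge> 1" using fin u by (metis card_0_eq empty_iff less_one not_le)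
    ultimately have "card (W - {u}) + 2 = K" using card by simp
    then have "real (card (W - {u})) = real K - 2" by linarith
    then show ?thesis by simp
  qed
  ultimately have "real (occ u x) \<le> ?i - (real K - 2) * (?i / real K)" using sum by linarith
  also have "\<dots> = 2 * (?i / real K)" using K0 by (simp add: field_simps)
  also have "\<dots> \<le> 2 * real (occ v x)"
  proof -
    have "?i \<le> real K * real (occ v x)" using big v by auto
    then show ?thesis using K0 by (simp add: divide_le_eq mult.commute)
  qed
  finally show ?thesis .
qed



lemma sfx_length: "l \<le> length x \<Longrightarrow> length (sfx x l) = l"
  by (simp add: sfx_def)

lemma tot_split: "tot x c = cnt x c b + cnt x c (\<not> b)"
  by (cases b) (simp_all add: tot_def)

lemma init_k_eq:
  assumes "k \<le> length x" "tot x (sfx x k) > 0"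
  shows "init_k k x = k"
  unfolding init_k_def
proof (rule Greatest_equality)
  show "k \<le> length x \<and> stored_k k x (sfx x k)" using assms by (simp add: stored_k_def sfx_length)
next
  fix y assume y: "y \<le> length x \<and> stored_k k x (sfx x y)"
  show "y \<le> k"
  proof (rule ccontr)
    assume "\<not> y \<le> k"
    then have "length (sfx x y) > k" using y sfx_length by auto
    then show False using y by (auto simp: stored_k_def)
  qed
qed

lemma chain_first:
  assumes "stored x (sfx x l)"
  shows "\<exists>cs. chain stored x l = sfx x l # cs \<and> (\<forall>c\<in>set cs. stored x c \<and> (\<exists>l'<l. c = sfx x l'))"
proof -
  have "rev [0..<Suc l] = l # rev [0..<l]" by simp
  then have "chain stored x l = sfx x l # filter (stored x) (map (sfx x) (rev [0..<l]))"
    using assms by (simp add: chain_def)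
  then show ?thesis by fastforce
qed

lemma ppmk_bit:
  assumes n: "n0k k \<le> n" and a: "a < rr n" and p: "p < XX n" and i: "i = NN n + a * XX n + p"
  shows "ee (stored_k k) (init_k k) SS i \<le> 2 / 3"
proof -
  define x where "x = prefix_of SS i"
  define b where "b = SS i"
  define c where "c = sfx x k"
  define K where "K = (2::nat) ^ Suc k + 1"
  have lx: "length x = i" by (simp add: x_def)
  have "Suc k \<le> j1k k" by (simp add: j1k_def algebra_simps)
  then have "Suc k \<le> n" using n by (simp add: n0k_def)
  then have ki: "Suc k \<le> i" using NN_ge[of n] i by simp
  have lc: "length c = k" using ki lx by (simp add: c_def sfx_length)
  have big: "real i \<le> real K * real (occ w x)" if "length w = Suc k" for w
  proof -
    have "i \<le> K * occ w x" using occ_prefix_big[OF that n a p] i by (simp add: x_def K_def)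
    then show ?thesis by (metis of_nat_le_iff of_nat_mult)
  qed
  have pos: "occ w x > 0" if "length w = Suc k" for w
  proof (rule ccontr)
    assume "\<not> occ w x > 0"
    then have "real i \<le> 0" using big[OF that] by simp
    then show False using ki by simp
  qed
  have cb: "cnt x c b > 0" unfolding cnt_def by (rule pos) (simp add: lc)
  have cnb: "cnt x c (\<not> b) > 0" unfolding cnt_def by (rule pos) (simp add: lc)
  have tot: "tot x c > 0" using cb by (simp add: tot_split[of x c b])
  have ini: "init_k k x = k" by (rule init_k_eq) (use ki lx tot c_def in auto)
  have st: "stored_k k x (sfx x k)" using tot lc by (simp add: stored_k_def c_def)
  obtain cs where ch: "chain (stored_k k) x k = c # cs"
    using chain_first[of "stored_k k" x k] st c_def by blast
  have esc: "esc x c = 2"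
  proof -
    have "cnt x c b' > 0" for b' using cb cnb by (cases b'; cases b) auto
    then have "{b. cnt x c b > 0} = UNIV" by auto
    then show ?thesis by (simp add: esc_def)
  qed
  have e: "ee (stored_k k) (init_k k) SS i = real (cnt x c b) / real (tot x c + 2)"
    unfolding ee_def x_def[symmetric] b_def[symmetric] ini ch using cb esc by simp
  let ?W = "{w :: bool list. length w = Suc k}"
  have finW: "finite ?W" using finite_lists_length_eq[of "UNIV :: bool set" "Suc k"] by simp
  have cardW: "card ?W + 1 = K"
    using card_lists_length_eq[of "UNIV :: bool set" "Suc k"] by (simp add: K_def)
  have r: "real (cnt x c b) \<le> 2 * real (cnt x c (\<not> b))"
    unfolding cnt_def
    by (rule ratio_bound[OF finW _ _ _ _ _ cardW, of _ _ "Suc k"]) (use lc big lx in auto)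
  have "real (cnt x c b) / real (tot x c + 2) \<le> 2 / 3"
  proof -
    have "real (tot x c + 2) = real (cnt x c b) + real (cnt x c (\<not> b)) + 2"
      by (simp add: tot_split[of x c b])
    then show ?thesis using r by (simp add: divide_le_eq)
  qed
  then show ?thesis using e by simp
qed

lemma ppmk_final: "lower_ratio (ppm_k_len k) SS \<ge> 1 / 2"
proof -
  define i0 where "i0 = NN (n0k k)"
  have bit: "ee (stored_k k) (init_k k) SS i \<le> 2 / 3" if "i0 \<le> i" for i
  proof -
    have "NN (n0k k) \<le> i" using that by (simp add: i0_def)
    then have "\<exists>n\<ge>n0k k. NN n \<le> i \<and> i < NN (Suc n)" by (rule exists_block_ge)
    then obtain n where n: "n \<ge> n0k k" "NN n \<le> i" "i < NN (Suc n)" by auto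
    define y where "y = i - NN n"
    have y: "y < rr n * XX n" using n by (simp add: y_def NN_Suc)
    have a: "y div XX n < rr n" using y XX_pos[of n] by (simp add: div_less_iff_less_mult)
    have p: "y mod XX n < XX n" using XX_pos[of n] by simp
    have i: "i = NN n + (y div XX n) * XX n + y mod XX n" using n(2) by (simp add: y_def)
    show ?thesis by (rule ppmk_bit[OF n(1) a p i])
  qed
  have ev: "ereal (1 / 2) \<le> ereal (ppm_k_len k (prefix_of SS m) / real m)" if m: "8 * i0 + 1 \<le> m" for m
  proof -
    have pr: "prob_model (stored_k k) (init_k k) (prefix_of SS m) \<le> (2 / 3) ^ (m - i0)"
      by (rule prob_upper) (rule bit, simp)
    have pp: "prob_model (stored_k k) (init_k k) (prefix_of SS m) > 0" by (rule prob_pos)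
    have "log 2 (prob_model (stored_k k) (init_k k) (prefix_of SS m)) \<le> log 2 ((2 / 3) ^ (m - i0))"
      using pr pp by simp
    also have "\<dots> = real (m - i0) * log 2 (2 / 3)" by (simp add: log_nat_power)
    also have "log 2 (2 / 3 :: real) = - log 2 (3 / 2)" by (simp add: log_divide)
    finally have "real (m - i0) * log 2 (3 / 2) \<le> - log 2 (prob_model (stored_k k) (init_k k) (prefix_of SS m))"
      by simp
    moreover have "real (m - i0) * (4 / 7) \<le> real (m - i0) * log 2 (3 / 2)"
      using log_32 by (intro mult_left_mono) simp_all
    ultimately have c: "real (m - i0) * (4 / 7) \<le> ppm_k_len k (prefix_of SS m)"
      using code_len_ge[of "stored_k k" "init_k k" "prefix_of SS m"] unfolding ppm_k_len_def by linarith
    have "real m / 2 \<le> real (m - i0) * (4 / 7)" using m by (simp add: of_nat_diff)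
    then have "real m / 2 \<le> ppm_k_len k (prefix_of SS m)" using c by linarith
    then have "1 / 2 \<le> ppm_k_len k (prefix_of SS m) / real m" using m by (simp add: le_divide_eq)
    then show ?thesis by simp
  qed
  have "ereal (1 / 2) \<le> lower_ratio (ppm_k_len k) SS"
    unfolding lower_ratio_def
    by (rule Liminf_bounded) (use ev in \<open>auto intro: eventually_sequentiallyI[of "8 * i0 + 1"]\<close>)
  moreover have "ereal (1 / 2) = 1 / 2" by (simp add: one_ereal_def divide_ereal_def)
  ultimately show ?thesis by simp
qed



lemma sfx0: "sfx x 0 = []" by (simp add: sfx_def)

lemma stored_star_nil: "stored_star x []" by (simp add: stored_star_def)

lemma stored_star_tot: "stored_star x c \<Longrightarrow> c \<noteq> [] \<Longrightarrow> tot x c > 0"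
  by (auto simp: stored_star_def)

definition detex :: "bool list \<Rightarrow> bool" where
  "detex x \<longleftrightarrow> (\<exists>l \<le> length x. stored_star x (sfx x l) \<and> esc x (sfx x l) = 1)"

lemma init_star_props:
  shows "init_star x \<le> length x \<and> stored_star x (sfx x (init_star x))"
    and "detex x \<Longrightarrow> esc x (sfx x (init_star x)) = 1"
    and "detex x \<Longrightarrow> l < init_star x \<Longrightarrow> l \<le> length x \<Longrightarrow> stored_star x (sfx x l) \<Longrightarrow> esc x (sfx x l) \<noteq> 1"
    and "\<not> detex x \<Longrightarrow> l \<le> length x \<Longrightarrow> stored_star x (sfx x l) \<Longrightarrow> esc x (sfx x l) \<noteq> 1"
proof -
  let ?P = "\<lambda>l. l \<le> length x \<and> stored_star x (sfx x l) \<and> esc x (sfx x l) = 1"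
  let ?Q = "\<lambda>l. l \<le> length x \<and> stored_star x (sfx x l)"
  show "init_star x \<le> length x \<and> stored_star x (sfx x (init_star x))"
  proof (cases "detex x")
    case True
    then have "\<exists>l. ?P l" by (auto simp: detex_def)
    then have "?P (LEAST l. ?P l)" by (rule LeastI_ex)
    moreover have "init_star x = (LEAST l. ?P l)" unfolding init_star_def detex_def[symmetric] using True by simp
    ultimately show ?thesis by simp
  next
    case False
    have q0: "?Q 0" by (simp add: sfx0 stored_star_nil)
    have "?Q (Greatest ?Q)"
      by (rule GreatestI_nat[where P="?Q" and k=0 and b="length x"]) (use q0 in auto)
    moreover have "init_star x = (GREATEST l. ?Q l)" unfolding init_star_def detex_def[symmetric] using False by simp
    ultimately show ?thesis by simp
  qed
  show "detex x \<Longrightarrow> esc x (sfx x (init_star x)) = 1"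
  proof -
    assume True: "detex x"
    then have "\<exists>l. ?P l" by (auto simp: detex_def)
    then have "?P (LEAST l. ?P l)" by (rule LeastI_ex)
    moreover have "init_star x = (LEAST l. ?P l)" unfolding init_star_def detex_def[symmetric] using True by simp
    ultimately show ?thesis by simp
  qed
  show "detex x \<Longrightarrow> l < init_star x \<Longrightarrow> l \<le> length x \<Longrightarrow> stored_star x (sfx x l) \<Longrightarrow> esc x (sfx x l) \<noteq> 1"
  proof -
    assume True: "detex x" and l: "l < init_star x" "l \<le> length x" "stored_star x (sfx x l)"
    have "init_star x = (LEAST l. ?P l)" unfolding init_star_def detex_def[symmetric] using True by simp
    then have "\<not> ?P l" using l(1) not_less_Least[of l ?P] by simp
    then show ?thesis using l by simp
  qed
  show "\<not> detex x \<Longrightarrow> l \<le> length x \<Longrightarrow> stored_star x (sfx x l) \<Longrightarrow> esc x (sfx x l) \<noteq> 1"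
    by (auto simp: detex_def)
qed

lemma enc_nondet:
  assumes "\<And>c. c \<in> set cs \<Longrightarrow> esc x c \<noteq> 1"
  shows "enc x b cs \<ge> 1 / (real (length x) + 2)"
  using assms
proof (induction cs)
  case Nil then show ?case by (simp add: divide_le_eq)
next
  case (Cons c cs)
  have IH: "enc x b cs \<ge> 1 / (real (length x) + 2)" using Cons by simp
  have e: "esc x c \<noteq> 1" using Cons.prems by simp
  show ?case
  proof (cases "cnt x c b > 0")
    case True
    have "tot x c + esc x c \<le> length x + 2" using tot_le[of x c] esc_le2[of x c] by simp
    then have d: "real (tot x c + esc x c) \<le> real (length x) + 2" by linarith
    have d0: "real (tot x c + esc x c) > 0" using True cnt_le_tot[of x c b] by linarith
    have "1 / (real (length x) + 2) \<le> 1 / real (tot x c + esc x c)"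
      using d d0 by (intro divide_left_mono) auto
    also have "\<dots> \<le> real (cnt x c b) / real (tot x c + esc x c)"
      using True d0 by (intro divide_right_mono) auto
    finally show ?thesis using True by simp
  next
    case False
    have "esc x c \<noteq> 2" using esc_2[of x c b] False by auto
    then have "esc x c = 0" using e esc_le2[of x c] by linarith
    then have "tot x c = 0" by (rule esc_0)
    then show ?thesis using False IH \<open>esc x c = 0\<close> by simp
  qed
qed

lemma enc_det_first:
  assumes "esc x c = 1" and rest: "enc x b cs \<ge> 1 / (real (length x) + 2)"
  shows "enc x b (c # cs) \<ge> 1 / (real (length x) + 2) ^ 2"
proof -
  let ?L = "real (length x)"
  have t: "real (tot x c) \<le> ?L" using tot_le[of x c] by simp
  have a: "1 / (?L + 2) ^ 2 \<le> 1 / (?L + 1) * (1 / (?L + 2))"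
  proof -
    have pos: "0 < (?L + 1) * (?L + 2)" by simp
    have le: "(?L + 1) * (?L + 2) \<le> (?L + 2) ^ 2" unfolding power2_eq_square
      by (rule mult_right_mono) auto
    have "1 / (?L + 2) ^ 2 \<le> 1 / ((?L + 1) * (?L + 2))"
      by (rule divide_left_mono[OF le]) (use pos in auto)
    then show ?thesis by simp
  qed
  show ?thesis
  proof (cases "cnt x c b > 0")
    case True
    have "1 / (?L + 1) * (1 / (?L + 2)) \<le> 1 / (?L + 1) * 1"
      by (rule mult_left_mono) auto
    then have "1 / (?L + 2) ^ 2 \<le> 1 / (?L + 1)" using a by simp
    also have "\<dots> \<le> 1 / real (tot x c + 1)" using t by (intro divide_left_mono) auto
    also have "\<dots> \<le> real (cnt x c b) / real (tot x c + 1)" using True by (intro divide_right_mono) auto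
    finally show ?thesis using True assms(1) by simp
  next
    case False
    have "1 / (?L + 2) ^ 2 \<le> 1 / (?L + 1) * (1 / (?L + 2))" by (rule a)
    also have "\<dots> \<le> 1 / real (tot x c + 1) * enc x b cs"
      using t rest by (intro mult_mono divide_left_mono) auto
    finally show ?thesis using False assms(1) by simp
  qed
qed

lemma ee_star_gen: "ee stored_star init_star S i \<ge> 1 / (real i + 2) ^ 2"
proof -
  define x where "x = prefix_of S i"
  define l0 where "l0 = init_star x"
  have lx: "length x = i" by (simp add: x_def)
  have p: "l0 \<le> length x" "stored_star x (sfx x l0)" using init_star_props(1)[of x] by (auto simp: l0_def)
  obtain cs where ch: "chain stored_star x l0 = sfx x l0 # cs"
    and cs: "\<And>c. c \<in> set cs \<Longrightarrow> stored_star x c \<and> (\<exists>l'<l0. c = sfx x l')"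
    using chain_first[of stored_star x l0] p(2) by blast
  have ee: "ee stored_star init_star S i = enc x (S i) (sfx x l0 # cs)"
    by (simp add: ee_def x_def[symmetric] l0_def[symmetric] ch)
  have L2: "(1 :: real) / (real i + 2) ^ 2 \<le> 1 / (real i + 2)"
    by (simp add: power2_eq_square divide_le_eq field_simps)
  show ?thesis
  proof (cases "detex x")
    case True
    have e1: "esc x (sfx x l0) = 1" using init_star_props(2)[OF True] by (simp add: l0_def)
    have "\<And>c. c \<in> set cs \<Longrightarrow> esc x c \<noteq> 1"
    proof -
      fix c assume c: "c \<in> set cs"
      then obtain l' where l': "l' < l0" "c = sfx x l'" using cs by blast
      show "esc x c \<noteq> 1"
        using init_star_props(3)[OF True, of l'] l' p(1) cs[OF c] by (simp add: l0_def)
    qed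
    then have "enc x (S i) cs \<ge> 1 / (real (length x) + 2)" by (rule enc_nondet)
    then have "enc x (S i) (sfx x l0 # cs) \<ge> 1 / (real (length x) + 2) ^ 2" by (rule enc_det_first[OF e1])
    then show ?thesis using ee lx by simp
  next
    case False
    have "\<And>c. c \<in> set (sfx x l0 # cs) \<Longrightarrow> esc x c \<noteq> 1"
    proof -
      fix c assume c: "c \<in> set (sfx x l0 # cs)"
      have "\<exists>l'. l' \<le> l0 \<and> c = sfx x l' \<and> stored_star x c"
      proof (cases "c = sfx x l0")
        case True then show ?thesis using p by blast
      next
        case False
        then have "c \<in> set cs" using c by simp
        then show ?thesis using cs by (meson less_imp_le)
      qed
      then obtain l' where l': "l' \<le> l0" "c = sfx x l'" "stored_star x c" by blast
      show "esc x c \<noteq> 1" using init_star_props(4)[OF False, of l'] l' p(1) by simp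
    qed
    then have "enc x (S i) (sfx x l0 # cs) \<ge> 1 / (real (length x) + 2)" by (rule enc_nondet)
    then show ?thesis using ee lx L2 by simp
  qed
qed



definition zw :: "nat \<Rightarrow> bool list \<Rightarrow> nat \<Rightarrow> bool" where
  "zw L zs q \<longleftrightarrow> q + L \<le> length zs \<and> (\<forall>l<L. zs ! (q + l) = False)"

definition nzr :: "nat \<Rightarrow> bool list \<Rightarrow> bool" where
  "nzr L zs \<longleftrightarrow> (\<forall>q. \<not> zw L zs q)"

lemma zw_shift:
  assumes "zw L (xs @ ys) q" "length xs \<le> q"
  shows "zw L ys (q - length xs)"
  using assms by (auto simp: zw_def nth_append)

lemma zw_in_left:
  assumes "zw L (xs @ ys) q" "q + L \<le> length xs"
  shows "zw L xs q"
  using assms by (auto simp: zw_def nth_append)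

lemma A1:
  assumes nz: "nzr L xs" and last: "xs \<noteq> [] \<Longrightarrow> last xs = True" and q: "q < length xs"
    and z: "zw L (xs @ ys) q"
  shows False
proof (cases "q + L \<le> length xs")
  case True
  then show False using zw_in_left[OF z True] nz by (simp add: nzr_def)
next
  case False
  define l where "l = length xs - 1 - q"
  have l: "l < L" "q + l = length xs - 1" using False q by (auto simp: l_def)
  have "(xs @ ys) ! (q + l) = False" using z l(1) by (simp add: zw_def)
  moreover have "(xs @ ys) ! (q + l) = last xs"
  proof -
    have ne: "xs \<noteq> []" using q by auto
    have lt: "length xs - 1 < length xs" using q by simp
    have "(xs @ ys) ! (q + l) = xs ! (length xs - 1)" using l(2) nth_append_left[OF lt, of ys] by simp
    then show ?thesis using last_conv_nth[OF ne] by simp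
  qed
  moreover have "xs \<noteq> []" using q by auto
  ultimately show False using last by auto
qed

lemma nzr_append:
  assumes "nzr L xs" "nzr L ys" "xs \<noteq> [] \<Longrightarrow> last xs = True"
  shows "nzr L (xs @ ys)"
  unfolding nzr_def
proof
  fix q show "\<not> zw L (xs @ ys) q"
  proof
    assume z: "zw L (xs @ ys) q"
    show False
    proof (cases "q < length xs")
      case True then show False using A1[OF assms(1,3) True z] by simp
    next
      case False
      then show False using zw_shift[OF z] assms(2) by (simp add: nzr_def)
    qed
  qed
qed

lemma nzr_mono: "nzr L zs \<Longrightarrow> L \<le> L' \<Longrightarrow> nzr L' zs"
  unfolding nzr_def zw_def
proof (intro allI notI)
  fix q assume h: "\<forall>q. \<not> (q + L \<le> length zs \<and> (\<forall>l<L. zs ! (q + l) = False))" "L \<le> L'"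
    "q + L' \<le> length zs \<and> (\<forall>l<L'. zs ! (q + l) = False)"
  then have "q + L \<le> length zs \<and> (\<forall>l<L. zs ! (q + l) = False)" by auto
  then show False using h(1) by blast
qed

lemma nzr_concat:
  assumes "\<And>u. u \<in> set us \<Longrightarrow> nzr L u \<and> (u \<noteq> [] \<longrightarrow> last u = True)" and L: "L \<ge> 1"
  shows "nzr L (concat us)"
  using assms
proof (induction us)
  case Nil then show ?case by (simp add: nzr_def zw_def)
next
  case (Cons u us)
  then show ?case by (simp, intro nzr_append) auto
qed

lemma nzr_seg: "length u = n \<Longrightarrow> nzr (n + 1) (u @ [True])"
  unfolding nzr_def zw_def
proof (intro allI notI)
  fix q assume u: "length u = n" and h: "q + (n + 1) \<le> length (u @ [True]) \<and> (\<forall>l<n + 1. (u @ [True]) ! (q + l) = False)"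
  then have "q = 0" by simp
  then have "(u @ [True]) ! (q + n) = False" using h by simp
  then show False using u \<open>q = 0\<close> by (simp add: nth_append)
qed

lemma nzr_body: "nzr (n + 1) (body n)"
  unfolding body_def
proof (rule nzr_concat)
  fix u assume "u \<in> set (map (\<lambda>u. u @ [True]) (words n))"
  then obtain v where v: "v \<in> set (words n)" "u = v @ [True]" by auto
  then have "length v = n" by (simp add: words_len)
  then have "nzr (n + 1) (v @ [True])" by (rule nzr_seg)
  then show "nzr (n + 1) u \<and> (u \<noteq> [] \<longrightarrow> last u = True)" using v by simp
qed simp

lemma last_xb: "xb n \<noteq> [] \<and> last (xb n) = True"
  using body_ne[of n] body_last[of n] by (simp add: xb_def)

lemma nzr_xb: "nzr (n + 2) (xb n)"
proof -
  have a: "nzr (n + 2) (replicate (n + 1) False @ [True])"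
    unfolding nzr_def zw_def
  proof (intro allI notI)
    fix q assume h: "q + (n + 2) \<le> length (replicate (n + 1) False @ [True]) \<and>
       (\<forall>l<n + 2. (replicate (n + 1) False @ [True]) ! (q + l) = False)"
    then have "q = 0" by simp
    then have "(replicate (n + 1) False @ [True]) ! (n + 1) = False" using h[THEN conjunct2, rule_format, of "n + 1"] by simp
    then show False by (simp add: nth_append)
  qed
  have b: "nzr (n + 2) (body n)" by (rule nzr_mono[OF nzr_body]) simp
  have "nzr (n + 2) ((replicate (n + 1) False @ [True]) @ body n)"
    by (rule nzr_append[OF a b]) simp
  then show ?thesis by (simp add: xb_def)
qed

lemma nzr_blk: "nzr (n + 2) (blk n)"
  unfolding blk_def by (rule nzr_concat) (use nzr_xb last_xb in auto)

lemma concat_rep_snoc: "concat (replicate (Suc r) xs) = concat (replicate r xs) @ xs"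
  by (induction r) auto

lemma last_blk: "blk n \<noteq> [] \<and> last (blk n) = True"
proof -
  obtain r where r: "rr n = Suc r" using rr_pos[of n] by (cases "rr n") auto
  have "blk n = concat (replicate r (xb n)) @ xb n"
    unfolding blk_def r by (rule concat_rep_snoc)
  then show ?thesis using last_xb[of n] by simp
qed

lemma pre_props: "nzr (n + 1) (pre n) \<and> (pre n \<noteq> [] \<longrightarrow> last (pre n) = True)"
proof (induction n)
  case 0 then show ?case by (simp add: nzr_def zw_def)
next
  case (Suc n)
  have "nzr (n + 2) (pre n)" using Suc nzr_mono by fastforce
  then have "nzr (n + 2) (pre n @ blk n)" using nzr_append nzr_blk Suc by blast
  then show ?case using last_blk[of n] by simp
qed



lemma xb_nth_True: "xb n ! (n + 1) = True"
  by (simp add: xb_def nth_append)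

lemma xb_nth_False: assumes l: "l < n + 1" shows "xb n ! l = False"
proof -
  have "xb n ! l = replicate (n + 1) False ! l"
    unfolding xb_def using l by (simp only: nth_append length_replicate if_True)
  also have "\<dots> = False" by (rule nth_replicate[OF l])
  finally show ?thesis .
qed

lemma A2:
  assumes z: "zw (n + 1) (xb n @ ys) q"
  shows "q = 0 \<or> XX n \<le> q"
proof (rule ccontr)
  assume "\<not> (q = 0 \<or> XX n \<le> q)"
  then have q: "0 < q" "q < XX n" by auto
  show False
  proof (cases "q \<le> n + 1")
    case True
    define l where "l = n + 1 - q"
    have l: "l < n + 1" "q + l = n + 1" using q True by (auto simp: l_def)
    have "(xb n @ ys) ! (q + l) = False" using z l(1) by (simp add: zw_def)
    moreover have "(xb n @ ys) ! (n + 1) = True"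
    proof -
      have "n + 1 < length (xb n)" using XX_eq[of n] by (simp add: XX_def)
      then show ?thesis using xb_nth_True[of n] by (simp add: nth_append_left)
    qed
    ultimately show False using l(2) by simp
  next
    case False
    have eq: "xb n @ ys = (replicate (n + 1) False @ [True]) @ (body n @ ys)" by (simp add: xb_def)
    have z2: "zw (n + 1) (body n @ ys) (q - (n + 2))"
      using zw_shift[of "n + 1" "replicate (n + 1) False @ [True]" "body n @ ys" q] z False eq by simp
    have "q - (n + 2) < length (body n)" using q False by (simp add: XX_def xb_def)
    then show False using A1[OF nzr_body _ _ z2] body_last by blast
  qed
qed

lemma A3:
  assumes p: "p < XX n"
  shows "zw (n + 1) (concat (replicate a (xb n)) @ take p (xb n)) q \<Longrightarrow> \<exists>j\<le>a. q = j * XX n"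
proof (induction a arbitrary: q)
  case 0
  then have z: "zw (n + 1) (take p (xb n)) q" by simp
  have "zw (n + 1) (xb n @ []) q"
    using z p by (auto simp: zw_def XX_def)
  then have "q = 0 \<or> XX n \<le> q" by (rule A2)
  moreover have "q < XX n" using z p by (auto simp: zw_def)
  ultimately show ?case by auto
next
  case (Suc a)
  have z: "zw (n + 1) (xb n @ (concat (replicate a (xb n)) @ take p (xb n))) q" using Suc.prems by simp
  have "q = 0 \<or> XX n \<le> q" by (rule A2[OF z])
  then show ?case
  proof
    assume "q = 0" then show ?thesis by auto
  next
    assume q: "XX n \<le> q"
    have "zw (n + 1) (concat (replicate a (xb n)) @ take p (xb n)) (q - XX n)"
      using zw_shift[OF z] q by (simp add: XX_def)
    then obtain j where "j \<le> a" "q - XX n = j * XX n" using Suc.IH by blast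
    then show ?thesis using q by (intro exI[of _ "Suc j"]) auto
  qed
qed

lemma A4:
  assumes "zw (n + 1) (pre n @ Z) q"
  shows "NN n \<le> q"
proof (rule ccontr)
  assume "\<not> NN n \<le> q"
  then have "q < length (pre n)" by (simp add: NN_def)
  then show False using A1[of "n + 1" "pre n" q Z] pre_props[of n] assms by blast
qed



lemma concat_rep2: "2 \<le> m \<Longrightarrow> concat (replicate m xs) = xs @ xs @ concat (replicate (m - 2) xs)"
proof -
  assume "2 \<le> m"
  then obtain k where "m = Suc (Suc k)" by (metis add_2_eq_Suc le_Suc_ex)
  then show ?thesis by simp
qed

lemma star_bit:
  assumes a3: "3 \<le> a" and a: "a < rr n" and p: "p < XX n" and i: "i = NN n + a * XX n + p"
  shows "ee stored_star init_star SS i \<ge> (real a - 1) / real a"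
proof -
  define X where "X = xb n"
  define XL where "XL = XX n"
  have XL: "length X = XL" by (simp add: X_def XL_def XX_def)
  have XL0: "0 < XL" using XX_pos by (simp add: XL_def)
  define Z where "Z = concat (replicate a X) @ take p X"
  define x where "x = prefix_of SS i"
  define b where "b = SS i"
  define c where "c = X @ take p X"
  have pXL: "p < XL" using p by (simp add: XL_def)
  have x: "x = pre n @ Z" unfolding x_def Z_def X_def i using block_prefix[OF a p] .
  have b: "b = X ! p" unfolding b_def X_def i using block_bit[OF a p] .
  have lx: "length x = i" by (simp add: x_def)
  have lZ: "length Z = a * XL + p" using pXL by (simp add: Z_def length_concat sum_list_replicate XL)
  have lc: "length c = XL + p" using pXL by (simp add: c_def XL)
  have cb: "c @ [b] = X @ take (Suc p) X" using pXL by (simp add: c_def b XL take_Suc_conv_app_nth)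
  have sfxc: "sfx x (XL + p) = c"
  proof -
    have "length x - (XL + p) = NN n + (a - 1) * XL" using lx a3 by (simp add: i XL_def algebra_simps)
    then have "sfx x (XL + p) = drop ((a - 1) * length X) Z"
      by (simp add: sfx_def x NN_def XL)
    also have "\<dots> = concat (replicate (a - (a - 1)) X) @ take p X"
      unfolding Z_def by (rule drop_concat_rep) simp
    also have "a - (a - 1) = 1" using a3 by simp
    finally show ?thesis by (simp add: c_def)
  qed
  have occ_in: "NN n + j * XL \<in> occset (c @ [b]) x" if j: "j < a - 1" for j
  proof -
    have dr: "drop (NN n + j * XL) x = concat (replicate (a - j) X) @ take p X"
    proof -
      have "drop (NN n + j * XL) x = drop (j * length X) Z" by (simp add: x NN_def XL)
      also have "\<dots> = concat (replicate (a - j) X) @ take p X"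
        unfolding Z_def by (rule drop_concat_rep) (use j in simp)
      finally show ?thesis .
    qed
    have "concat (replicate (a - j) X) = X @ X @ concat (replicate (a - j - 2) X)"
      by (rule concat_rep2) (use j in simp)
    then have "take (XL + p + 1) (drop (NN n + j * XL) x) = X @ take (Suc p) X"
      using dr pXL by (simp add: XL)
    moreover have "NN n + j * XL + (XL + p + 1) \<le> length x"
    proof -
      have "j * XL + XL + 1 \<le> a * XL"
      proof -
        have "(j + 2) * XL \<le> a * XL" using j by (intro mult_le_mono1) simp
        then show ?thesis using XL0 by (simp add: algebra_simps)
      qed
      then show ?thesis using lx by (simp add: i XL_def)
    qed
    moreover have lcb: "length (c @ [b]) = XL + p + 1" using lc by simp
    ultimately show ?thesis unfolding occset_def lcb using cb by simp
  qed
  have cnt_b: "a - 1 \<le> cnt x c b"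
  proof -
    have "(\<lambda>j. NN n + j * XL) ` {..<a - 1} \<subseteq> occset (c @ [b]) x" using occ_in by auto
    then have "card ((\<lambda>j. NN n + j * XL) ` {..<a - 1}) \<le> card (occset (c @ [b]) x)"
      by (rule card_mono[rotated]) simp
    moreover have "card ((\<lambda>j. NN n + j * XL) ` {..<a - 1}) = a - 1"
      by (subst card_image) (use XL0 in \<open>auto simp: inj_on_def\<close>)
    ultimately show ?thesis by (simp add: cnt_def occ_occset)
  qed
  have uniq: "b' = b" if q: "q \<in> occset (c @ [b']) x" for q b'
  proof -
    have qn: "q + (XL + p + 1) \<le> length x" and qe: "\<forall>l<XL + p + 1. x ! (q + l) = (c @ [b']) ! l"
      using q lc by (auto simp: occset_nth)
    have n1: "n + 1 \<le> XL" using XX_eq[of n] by (simp add: XL_def)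
    have zx: "zw (n + 1) x q"
      unfolding zw_def
    proof (intro conjI allI impI)
      show "q + (n + 1) \<le> length x" using qn n1 by simp
    next
      fix l assume l: "l < n + 1"
      have "x ! (q + l) = (c @ [b']) ! l" using qe l n1 by simp
      also have "\<dots> = X ! l" using l n1 lc by (simp add: nth_append c_def XL)
      also have "\<dots> = False" unfolding X_def by (rule xb_nth_False[OF l])
      finally show "x ! (q + l) = False" .
    qed
    have qN: "NN n \<le> q" using A4[of n Z q] zx x by simp
    have "zw (n + 1) Z (q - NN n)" using zw_shift[of "n + 1" "pre n" Z q] zx x qN by (simp add: NN_def)
    then obtain j where j: "j \<le> a" "q - NN n = j * XL"
      using A3[OF p, of a "q - NN n"] by (auto simp: Z_def X_def XL_def)
    have qj: "q = NN n + j * XL" using j qN by simp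
    have ja: "Suc j < a"
    proof -
      have "j * XL + XL + p + 1 \<le> a * XL + p" using qn lx qj by (simp add: i XL_def)
      then have "Suc j * XL < a * XL" by simp
      then show ?thesis using mult_less_cancel2[of "Suc j" XL a] by blast
    qed
    have "b' = (c @ [b']) ! (XL + p)" using lc nth_append_length[of c b' "[]"] by simp
    also have "\<dots> = x ! (q + (XL + p))" using qe by simp
    also have "\<dots> = Z ! (Suc j * length X + p)"
      using qj by (simp add: x nth_append NN_def XL algebra_simps)
    also have "\<dots> = X ! p" unfolding Z_def by (rule nth_concat_rep) (use ja pXL XL in auto)
    finally show ?thesis using b by simp
  qed
  have cnt_nb: "cnt x c (\<not> b) = 0"
  proof (rule ccontr)
    assume "cnt x c (\<not> b) \<noteq> 0"
    then have "occset (c @ [\<not> b]) x \<noteq> {}" by (auto simp: cnt_def occ_occset)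
    then obtain q where "q \<in> occset (c @ [\<not> b]) x" by blast
    then show False using uniq by fastforce
  qed
  have cpos: "cnt x c b > 0" using cnt_b a3 by simp
  have esc1: "esc x c = 1" by (rule esc_1_I[OF cpos cnt_nb])
  have stc: "stored_star x c"
  proof -
    have cne: "c \<noteq> []" using lc XL0 by auto
    have "occ (c @ [b]) x \<le> occ (take (length c - 1) (c @ [b])) x" by (rule occ_take_pat) simp
    moreover have "take (length c - 1) (c @ [b]) = butlast c" using cne by (simp add: butlast_conv_take)
    ultimately have "2 \<le> occ (butlast c) x" using cnt_b a3 by (simp add: cnt_def)
    moreover have "c = butlast c @ [last c]" using cne by simp
    moreover have "tot x c > 0" using cpos cnt_le_tot[of x c b] by simp
    ultimately show ?thesis unfolding stored_star_def by blast
  qed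
  have lcx: "XL + p \<le> length x"
  proof -
    have "1 * XL \<le> a * XL" using a3 by (intro mult_le_mono1) simp
    then have "XL \<le> a * XL" by simp
    then show ?thesis using lx unfolding i XL_def by linarith
  qed
  have dx: "detex x" unfolding detex_def using lcx sfxc stc esc1 by auto
  define l0 where "l0 = init_star x"
  have l0: "l0 \<le> length x" "stored_star x (sfx x l0)" "esc x (sfx x l0) = 1"
    using init_star_props(1)[of x] init_star_props(2)[OF dx] by (auto simp: l0_def)
  have l0c: "l0 \<le> XL + p"
  proof (rule ccontr)
    assume "\<not> l0 \<le> XL + p"
    then have "XL + p < init_star x" by (simp add: l0_def)
    then show False using init_star_props(3)[OF dx _ lcx] sfxc stc esc1 by auto
  qed
  define d where "d = XL + p - l0"
  have c0: "sfx x l0 = drop d c"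
  proof -
    have "sfx x l0 = drop (length x - l0) x" by (simp add: sfx_def)
    also have "length x - l0 = (length x - (XL + p)) + d" using l0c lcx by (simp add: d_def)
    also have "drop ((length x - (XL + p)) + d) x = drop d (sfx x (XL + p))"
      by (simp add: sfx_def add.commute)
    finally show ?thesis using sfxc by simp
  qed
  have cnt0: "a - 1 \<le> cnt x (sfx x l0) b"
  proof -
    have "drop d (c @ [b]) = drop d c @ [b]" using l0c lc by (simp add: d_def)
    then have "occ (c @ [b]) x \<le> occ (drop d c @ [b]) x"
      using occ_drop_pat[of d "c @ [b]" x] lc by (simp add: d_def)
    then show ?thesis using cnt_b c0 by (simp add: cnt_def)
  qed
  have c0pos: "cnt x (sfx x l0) b > 0" using cnt0 a3 by simp
  have c0nb: "cnt x (sfx x l0) (\<not> b) = 0" by (rule esc_1[OF l0(3) c0pos])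
  obtain cs where ch: "chain stored_star x l0 = sfx x l0 # cs"
    using chain_first[of stored_star x l0] l0(2) by blast
  have ee: "ee stored_star init_star SS i = real (cnt x (sfx x l0) b) / real (cnt x (sfx x l0) b + 1)"
    unfolding ee_def x_def[symmetric] b_def[symmetric] l0_def[symmetric] ch
    using c0pos c0nb l0(3) by (simp add: tot_split[of x "sfx x l0" b])
  define f where "f = cnt x (sfx x l0) b"
  have f: "real a - 1 \<le> real f" using cnt0 a3 by (simp add: f_def of_nat_diff)
  have "(real a - 1) / real a \<le> real f / real (f + 1)"
  proof -
    have a0: "0 < real a" using a3 by simp
    have "(real a - 1) * real (f + 1) \<le> real f * real a"
      using f by (simp add: algebra_simps)
    then show ?thesis using a0 by (simp add: divide_le_eq le_divide_eq field_simps)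
  qed
  then show ?thesis using ee by (simp add: f_def)
qed



definition DD :: "nat \<Rightarrow> real" where
  "DD i = - log 2 (ee stored_star init_star SS i)"

lemma DD_nonneg: "0 \<le> DD i"
  using ee_pos[of stored_star init_star SS i] ee_le1[of stored_star init_star SS i]
  by (simp add: DD_def)

lemma DD_gen: "DD i \<le> 2 * log 2 (real i + 2)"
proof -
  have e: "1 / (real i + 2) ^ 2 \<le> ee stored_star init_star SS i" by (rule ee_star_gen)
  have "log 2 (1 / (real i + 2) ^ 2) \<le> log 2 (ee stored_star init_star SS i)"
    using e ee_pos[of stored_star init_star SS i] by (subst log_le_cancel_iff) auto
  moreover have "log 2 (1 / (real i + 2) ^ 2) = - (2 * log 2 (real i + 2))"
    by (simp add: log_divide log_nat_power)
  ultimately show ?thesis by (simp add: DD_def)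
qed

lemma DD_blk:
  assumes "3 \<le> a" "a < rr n" "p < XX n"
  shows "DD (NN n + a * XX n + p) \<le> log 2 (real a) - log 2 (real a - 1)"
proof -
  have e: "(real a - 1) / real a \<le> ee stored_star init_star SS (NN n + a * XX n + p)"
    by (rule star_bit[OF assms refl])
  have a1: "0 < real a - 1" using assms by simp
  have "log 2 ((real a - 1) / real a) \<le> log 2 (ee stored_star init_star SS (NN n + a * XX n + p))"
    using e a1 ee_pos[of stored_star init_star SS "NN n + a * XX n + p"] by (subst log_le_cancel_iff) auto
  moreover have "log 2 ((real a - 1) / real a) = log 2 (real a - 1) - log 2 (real a)"
    using a1 by (simp add: log_divide)
  ultimately show ?thesis by (simp add: DD_def)
qed

lemma sum_shift: "sum g {m..<m + k} = (\<Sum>p<k. g (m + p))" for m k :: nat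
proof (induction k)
  case (Suc k)
  have "{m..<m + Suc k} = insert (m + k) {m..<m + k}" by auto
  then show ?case using Suc by (simp add: add.commute)
qed simp

lemma tele: "(\<Sum>a<r. (if 3 \<le> a then log 2 (real a) - log 2 (real a - 1) else 0))
   = (if 3 \<le> r then log 2 (real r - 1) - 1 else 0)"
proof (induction r)
  case 0 then show ?case by simp
next
  case (Suc r)
  show ?case
  proof (cases "3 \<le> r")
    case True
    then show ?thesis using Suc by simp
  next
    case False
    then have "r < 3" by simp
    then show ?thesis using Suc by (cases "r = 2") simp_all
  qed
qed

lemma tele_le: assumes r: "1 \<le> r"
  shows "(\<Sum>a<r. (if 3 \<le> a then log 2 (real a) - log 2 (real a - 1) else 0)) \<le> log 2 (real r)"
proof (cases "3 \<le> r")
  case True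
  have h: "log 2 (real r - 1) \<le> log 2 (real r)" using True by (subst log_le_cancel_iff) auto
  have t: "(\<Sum>a<r. (if 3 \<le> a then log 2 (real a) - log 2 (real a - 1) else 0)) = log 2 (real r - 1) - 1"
    using True tele[of r] by simp
  show ?thesis using t h by linarith
next
  case False
  have h: "0 \<le> log 2 (real r)" using r by simp
  show ?thesis using False tele[of r] h by simp
qed

lemma log_i_bound:
  assumes "i < NN (Suc n)"
  shows "log 2 (real i + 2) \<le> 8 * real n + 10"
proof -
  have "i + 2 \<le> 2 * 256 ^ (n + 1) + 1" using assms NN_le[of "Suc n"] by simp
  also have "\<dots> \<le> 4 * 256 ^ (n + 1)" by simp
  also have "\<dots> = (2::nat) ^ (8 * n + 10)" by (simp add: power_add power_mult)
  finally have "real i + 2 \<le> 2 ^ (8 * n + 10)" by (metis of_nat_add of_nat_le_iff of_nat_numeral of_nat_power)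
  then have "log 2 (real i + 2) \<le> log 2 (2 ^ (8 * n + 10))" by (subst log_le_cancel_iff) auto
  also have "\<dots> = 8 * real n + 10" by (simp add: log_nat_power)
  finally show ?thesis .
qed

lemma log_rr: "log 2 (real (rr n)) = 6 * (real n + 1)"
proof -
  have "(2::nat) ^ (6 * (n + 1)) = (2 ^ 6) ^ (n + 1)" by (rule power_mult)
  then have "rr n = 2 ^ (6 * (n + 1))" by (simp add: rr_def)
  then have "real (rr n) = 2 ^ (6 * (n + 1))" by simp
  then show ?thesis by (simp add: log_nat_power)
qed

lemma block_sum:
  "(\<Sum>y<rr n * XX n. DD (NN n + y)) \<le> real (XX n) * (54 * real n + 66)"
proof -
  let ?X = "XX n" and ?r = "rr n" and ?G = "16 * real n + 20"
  define h where "h a = (if 3 \<le> a then log 2 (real a) - log 2 (real a - 1) else ?G)" for a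
  have "(\<Sum>y<?r * ?X. DD (NN n + y)) = (\<Sum>a<?r. \<Sum>y\<in>{a * ?X..<a * ?X + ?X}. DD (NN n + y))"
    by (rule sum.nat_group[symmetric])
  also have "\<dots> = (\<Sum>a<?r. \<Sum>p<?X. DD (NN n + a * ?X + p))"
    by (rule sum.cong[OF refl]) (simp add: sum_shift add.assoc)
  also have "\<dots> \<le> (\<Sum>a<?r. real ?X * h a)"
  proof (rule sum_mono)
    fix a assume a: "a \<in> {..<?r}"
    have "(\<Sum>p<?X. DD (NN n + a * ?X + p)) \<le> real (card {..<?X}) * h a"
    proof (rule sum_bounded_above)
      fix p assume p: "p \<in> {..<?X}"
      show "DD (NN n + a * ?X + p) \<le> h a"
      proof (cases "3 \<le> a")
        case True then show ?thesis using DD_blk[of a n p] a p by (simp add: h_def)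
      next
        case False
        have lt: "NN n + a * ?X + p < NN (Suc n)"
        proof -
          have "a * ?X + p < (a + 1) * ?X" using p by simp
          also have "\<dots> \<le> ?r * ?X" using a by (intro mult_le_mono1) simp
          finally show ?thesis by (simp add: NN_Suc)
        qed
        have "DD (NN n + a * ?X + p) \<le> 2 * log 2 (real (NN n + a * ?X + p) + 2)" by (rule DD_gen)
        also have "\<dots> \<le> 2 * (8 * real n + 10)" using log_i_bound[OF lt] by simp
        finally show ?thesis using False by (simp add: h_def)
      qed
    qed
    then show "(\<Sum>p<?X. DD (NN n + a * ?X + p)) \<le> real ?X * h a" by simp
  qed
  also have "\<dots> = real ?X * (\<Sum>a<?r. h a)" by (simp add: sum_distrib_left)
  also have "(\<Sum>a<?r. h a) = (\<Sum>a<?r. (if 3 \<le> a then log 2 (real a) - log 2 (real a - 1) else 0))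
      + (\<Sum>a<?r. (if a < 3 then ?G else 0))"
    unfolding sum.distrib[symmetric] by (rule sum.cong) (auto simp: h_def)
  also have "\<dots> \<le> log 2 (real ?r) + 3 * ?G"
  proof (rule add_mono)
    show "(\<Sum>a<?r. (if 3 \<le> a then log 2 (real a) - log 2 (real a - 1) else 0)) \<le> log 2 (real ?r)"
      by (rule tele_le) (use rr_pos[of n] in simp)
    have "(\<Sum>a<?r. (if a < 3 then ?G else 0)) \<le> (\<Sum>a<(3::nat). ?G)"
    proof -
      have "(\<Sum>a<?r. (if a < 3 then ?G else 0)) = (\<Sum>a\<in>{..<?r} \<inter> {..<3}. ?G)"
        by (simp add: sum.If_cases Int_def)
      also have "\<dots> \<le> (\<Sum>a<(3::nat). ?G)" by (rule sum_mono2) auto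
      finally show ?thesis .
    qed
    then show "(\<Sum>a<?r. (if a < 3 then ?G else 0)) \<le> 3 * ?G" by simp
  qed
  finally have "(\<Sum>y<?r * ?X. DD (NN n + y)) \<le> real ?X * (log 2 (real ?r) + 3 * ?G)"
    by (simp add: mult_left_mono)
  also have "\<dots> = real ?X * (54 * real n + 66)" by (simp add: log_rr algebra_simps)
  finally show ?thesis .
qed



lemma sum_split_lt: "sum g {..<m + k} = sum g {..<m} + (\<Sum>p<k. g (m + p))" for m k :: nat
  by (induction k) (simp_all add: add.assoc)

lemma total_sum: "(\<Sum>i<NN n. DD i) \<le> (\<Sum>j<n. real (XX j) * (54 * real j + 66))"
proof (induction n)
  case 0 then show ?case by simp
next
  case (Suc n)
  have "(\<Sum>i<NN (Suc n). DD i) = (\<Sum>i<NN n. DD i) + (\<Sum>y<rr n * XX n. DD (NN n + y))"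
    by (simp add: NN_Suc sum_split_lt)
  also have "\<dots> \<le> (\<Sum>j<n. real (XX j) * (54 * real j + 66)) + real (XX n) * (54 * real n + 66)"
    using Suc.IH block_sum[of n] by (rule add_mono)
  finally show ?case by simp
qed

lemma sq_le_4pow: "(n + 1) ^ 2 \<le> (4::nat) ^ n"
proof (induction n)
  case 0 then show ?case by simp
next
  case (Suc n)
  have a: "n + 1 \<le> (4::nat) ^ n"
  proof -
    have "n + 1 \<le> (2::nat) ^ n" by (induction n) auto
    also have "\<dots> \<le> 4 ^ n" by (simp add: power_mono)
    finally show ?thesis .
  qed
  have "(Suc n + 1) ^ 2 = (n + 1) ^ 2 + 2 * n + 3" by (simp add: power2_eq_square)
  also have "\<dots> \<le> 4 ^ n + 3 * 4 ^ n" using Suc.IH a by simp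
  also have "\<dots> = 4 ^ Suc n" by simp
  finally show ?case .
qed

lemma sum_bound: "(\<Sum>j<Suc n. real (XX j) * (54 * real j + 66)) \<le> 264 * 16 ^ n"
proof -
  have t: "real (XX j) * (54 * real j + 66) \<le> 4 ^ (n + 1) * (54 * real n + 66)" if "j < Suc n" for j
  proof -
    have "XX j \<le> 4 ^ (j + 1)" by (rule XX_le)
    also have "\<dots> \<le> 4 ^ (n + 1)" using that by (intro power_increasing) auto
    finally have "real (XX j) \<le> 4 ^ (n + 1)" by (metis of_nat_le_iff of_nat_numeral of_nat_power)
    moreover have "54 * real j + 66 \<le> 54 * real n + 66" using that by simp
    ultimately show ?thesis by (intro mult_mono) auto
  qed
  have "(\<Sum>j<Suc n. real (XX j) * (54 * real j + 66)) \<le> (\<Sum>j<Suc n. 4 ^ (n + 1) * (54 * real n + 66))"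
    by (rule sum_mono) (use t in auto)
  also have "\<dots> = real (n + 1) * 4 ^ (n + 1) * (54 * real n + 66)" by simp
  also have "\<dots> \<le> 4 ^ (n + 1) * (66 * real ((n + 1) ^ 2))"
    by (simp add: power2_eq_square algebra_simps)
  also have "\<dots> \<le> 4 ^ (n + 1) * (66 * 4 ^ n)"
  proof -
    have "real ((n + 1) ^ 2) \<le> 4 ^ n" using sq_le_4pow[of n] by (metis of_nat_le_iff of_nat_numeral of_nat_power)
    then show ?thesis by simp
  qed
  also have "\<dots> = 264 * (4 ^ n * 4 ^ n)" by simp
  also have "(4::real) ^ n * 4 ^ n = 16 ^ n" by (simp add: power_mult_distrib[symmetric])
  finally show ?thesis by simp
qed

lemma NN_ge64: "1 \<le> n \<Longrightarrow> 64 ^ n \<le> NN n"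
proof -
  assume "1 \<le> n"
  then obtain k where k: "n = Suc k" by (cases n) auto
  have "64 ^ n = rr k" by (simp add: rr_def k)
  also have "\<dots> \<le> rr k * XX k" using XX_pos[of k] by simp
  also have "\<dots> \<le> NN n" by (simp add: k NN_Suc)
  finally show ?thesis .
qed

lemma star_len_nonneg: "0 \<le> ppm_star_len (prefix_of SS m)"
proof -
  have "0 \<le> - log 2 (prob_model stored_star init_star (prefix_of SS m))"
    unfolding log_prob_prefix by (rule sum_nonneg) (use DD_nonneg in \<open>simp add: DD_def\<close>)
  then show ?thesis using code_len_ge[of stored_star init_star "prefix_of SS m"]
    unfolding ppm_star_len_def by linarith
qed

lemma star_ratio:
  assumes n: "1 \<le> n" and m: "NN n \<le> m" "m < NN (Suc n)"
  shows "ppm_star_len (prefix_of SS m) / real m \<le> 265 / 4 ^ n"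
proof -
  have "ppm_star_len (prefix_of SS m) \<le> (\<Sum>i<m. DD i) + 1"
    using code_len_le[of stored_star init_star "prefix_of SS m"]
    unfolding ppm_star_len_def log_prob_prefix DD_def by simp
  also have "(\<Sum>i<m. DD i) \<le> (\<Sum>i<NN (Suc n). DD i)"
    by (rule sum_mono2) (use m DD_nonneg in auto)
  also have "\<dots> \<le> 264 * 16 ^ n" using total_sum[of "Suc n"] sum_bound[of n] by linarith
  finally have c0: "ppm_star_len (prefix_of SS m) \<le> 264 * 16 ^ n + 1" by simp
  have "(1::real) \<le> 16 ^ n" by simp
  then have c: "ppm_star_len (prefix_of SS m) \<le> 265 * 16 ^ n" using c0 by linarith
  have "(64::real) ^ n \<le> real m"
  proof -
    have "64 ^ n \<le> m" using NN_ge64[OF n] m by simp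
    then show ?thesis by (metis of_nat_le_iff of_nat_numeral of_nat_power)
  qed
  moreover have "(0::real) < 64 ^ n" by simp
  ultimately have mpos: "0 < real m" by linarith
  have "ppm_star_len (prefix_of SS m) / real m \<le> 265 * 16 ^ n / real m"
    using c mpos by (intro divide_right_mono) auto
  also have "\<dots> \<le> 265 * 16 ^ n / 64 ^ n"
  proof (rule divide_left_mono)
    show "(64::real) ^ n \<le> real m" by fact
    show "0 \<le> 265 * (16::real) ^ n" by simp
    show "0 < real m * 64 ^ n" using mpos by simp
  qed
  also have "\<dots> = 265 / 4 ^ n"
  proof -
    have "(64::real) ^ n = 16 ^ n * 4 ^ n" by (simp add: power_mult_distrib[symmetric])
    then show ?thesis by simp
  qed
  finally show ?thesis .
qed

lemma star_lim: "(\<lambda>m. ppm_star_len (prefix_of SS m) / real m) \<longlonglongrightarrow> 0"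
proof (rule LIMSEQ_I)
  fix r :: real assume r: "0 < r"
  obtain N :: nat where N: "265 / r < real N" using reals_Archimedean2 by blast
  define N1 where "N1 = Suc N"
  have N1: "265 / 4 ^ n < r" if "N1 \<le> n" for n
  proof -
    have "real n + 1 \<le> 4 ^ n"
    proof -
      have "n + 1 \<le> (2::nat) ^ n" by (induction n) auto
      also have "\<dots> \<le> 4 ^ n" by (simp add: power_mono)
      finally show ?thesis by (metis of_nat_1 of_nat_add of_nat_le_iff of_nat_numeral of_nat_power)
    qed
    moreover have "265 / r < real n" using N that by (simp add: N1_def)
    ultimately have "265 / r < 4 ^ n" by linarith
    then show ?thesis using r by (simp add: divide_less_eq mult.commute)
  qed
  show "\<exists>no. \<forall>m\<ge>no. norm (ppm_star_len (prefix_of SS m) / real m - 0) < r"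
  proof (intro exI allI impI)
    fix m assume m: "NN N1 \<le> m"
    obtain n where n: "n \<ge> N1" "NN n \<le> m" "m < NN (Suc n)" using exists_block_ge[OF m] by blast
    have n1: "1 \<le> n" using n(1) by (simp add: N1_def)
    have "ppm_star_len (prefix_of SS m) / real m \<le> 265 / 4 ^ n" by (rule star_ratio[OF n1 n(2,3)])
    also have "\<dots> < r" by (rule N1[OF n(1)])
    finally have lt: "ppm_star_len (prefix_of SS m) / real m < r" .
    have "0 \<le> ppm_star_len (prefix_of SS m) / real m" using star_len_nonneg[of m] by simp
    then show "norm (ppm_star_len (prefix_of SS m) / real m - 0) < r" using lt by simp
  qed
qed

lemma star_final: "upper_ratio ppm_star_len SS = 0"
proof -
  have "(\<lambda>m. ereal (ppm_star_len (prefix_of SS m) / real m)) \<longlonglongrightarrow> ereal 0"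
    using star_lim by (rule tendsto_ereal)
  then have "limsup (\<lambda>m. ereal (ppm_star_len (prefix_of SS m) / real m)) = ereal 0"
    by (rule lim_imp_Limsup[rotated]) simp
  then show ?thesis by (simp add: upper_ratio_def zero_ereal_def)
qed

theorem theorem3:
  shows "\<exists>S :: nat \<Rightarrow> bool. upper_ratio ppm_star_len S = 0 \<and>
           (\<forall>k. lower_ratio (ppm_k_len k) S \<ge> 1 / 2)"
  using star_final ppmk_final by blast

end
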